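(* Let $d\geq 3$ and $n\geq 6$ be integers, and let $r$ be an integer. If $r<d+n$, then a general form of degree $d$ in $n+1$ variables has no apolar star configuration $\mathbb{X}(r)\subset\mathbb{P}^n$. If $r\geq d+n$, then a general form of degree $d$ in $n+1$ variables has an apolar star configuration $\mathbb{X}(r)$.
   Context: Let $S=\mathbb{C}[x_0,\dots,x_n]$ and $T=\mathbb{C}[y_0,\dots,y_n]$, where $T$ acts on $S$ by differentiation, $y_j=\partial/\partial x_j$. For a form $F\in S$, $F^\perp=\{\partial\in T:\partial F=0\}$. A finite set of points $\mathbb{X}\subset\mathbb{P}^n=\mathbb{P}(S_1)$ with defining ideal $I(\mathbb{X})\subseteq T$ is apolar to $F$ if $I(\mathbb{X})\subseteq F^\perp$. A star configuration $\mathbb{X}(r)\subset\mathbb{P}^n$: take $r$ linear forms $l_1,\dots,l_r\in T_1$ such that any $n+1$ of them are linearly independent; $\mathbb{X}(r)$ is the set of $\binom{r}{n}$ points obtained by intersecting the hyperplanes $\{l_i=0\}$ $n$ at a time in all possible ways. "A general form has (resp. has no) apolar $\mathbb{X}(r)$" means that all forms in some nonempty Zariski open subset of degree $d$ forms have (resp. have no) apolar star configuration $\mathbb{X}(r)$. *)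

theory Defs
  imports Complex_Main
begin

text \<open>Polynomials in the variables with indices 0..n are represented by their
coefficient functions on exponent vectors (nat \<Rightarrow> nat), with finite support
contained in the exponent vectors using only the variables 0..n.
The same representation is used for S = C[x_0..x_n] and T = C[y_0..y_n].\<close>

type_synonym expo = "nat \<Rightarrow> nat"
type_synonym cpoly = "expo \<Rightarrow> complex"

definition mons :: "nat \<Rightarrow> expo set" where
  "mons n = {\<alpha>. \<forall>i>n. \<alpha> i = 0}"

definition mdeg :: "nat \<Rightarrow> expo \<Rightarrow> nat" where
  "mdeg n \<alpha> = (\<Sum>i\<le>n. \<alpha> i)"

definition supp :: "cpoly \<Rightarrow> expo set" where
  "supp c = {\<alpha>. c \<alpha> \<noteq> 0}"

definition polys :: "nat \<Rightarrow> cpoly set" where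
  "polys n = {c. finite (supp c) \<and> supp c \<subseteq> mons n}"

definition forms :: "nat \<Rightarrow> nat \<Rightarrow> cpoly set" where
  "forms n d = {c. c \<in> polys n \<and> (\<forall>\<alpha>\<in>supp c. mdeg n \<alpha> = d)}"

definition peval :: "nat \<Rightarrow> cpoly \<Rightarrow> (nat \<Rightarrow> complex) \<Rightarrow> complex" where
  "peval n c v = (\<Sum>\<alpha>\<in>supp c. c \<alpha> * (\<Prod>i\<le>n. v i ^ \<alpha> i))"

text \<open>Action of T on S by differentiation, y_j = d/dx_j:
  y^\<beta> applied to x^(\<beta>+\<gamma>) gives ((\<beta>+\<gamma>)!/\<gamma>!) x^\<gamma>.
  The result is given by its coefficient function.\<close>
definition contract :: "nat \<Rightarrow> cpoly \<Rightarrow> cpoly \<Rightarrow> cpoly" where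
  "contract n g F = (\<lambda>\<gamma>. \<Sum>\<beta>\<in>supp g. g \<beta> * F (\<lambda>i. \<beta> i + \<gamma> i) *
      (\<Prod>i\<le>n. of_nat (fact (\<beta> i + \<gamma> i)) / of_nat (fact (\<gamma> i))))"

definition perp :: "nat \<Rightarrow> cpoly \<Rightarrow> cpoly set" where
  "perp n F = {g \<in> polys n. \<forall>\<gamma>. contract n g F \<gamma> = 0}"

text \<open>Vanishing ideal in T of a set of points of P^n, the points being given
  by the affine cone Z over them (a subset of C^(n+1)).\<close>
definition vanishing_ideal :: "nat \<Rightarrow> (nat \<Rightarrow> complex) set \<Rightarrow> cpoly set" where
  "vanishing_ideal n Z = {g \<in> polys n. \<forall>v\<in>Z. peval n g v = 0}"

definition lin :: "nat \<Rightarrow> (nat \<Rightarrow> complex) \<Rightarrow> (nat \<Rightarrow> complex) \<Rightarrow> complex" where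
  "lin n l v = (\<Sum>j\<le>n. l j * v j)"

definition lin_indep_on :: "nat \<Rightarrow> (nat \<Rightarrow> nat \<Rightarrow> complex) \<Rightarrow> nat set \<Rightarrow> bool" where
  "lin_indep_on n l S \<longleftrightarrow>
     (\<forall>c. (\<forall>j\<le>n. (\<Sum>i\<in>S. c i * l i j) = 0) \<longrightarrow> (\<forall>i\<in>S. c i = 0))"

definition star_data :: "nat \<Rightarrow> nat \<Rightarrow> (nat \<Rightarrow> nat \<Rightarrow> complex) \<Rightarrow> bool" where
  "star_data n r l \<longleftrightarrow>
     (\<forall>S\<subseteq>{..<r}. card S \<le> n + 1 \<longrightarrow> lin_indep_on n l S)"

text \<open>Affine cone over the star configuration X(r): the points obtained by
  intersecting the hyperplanes l_i = 0, n at a time.\<close>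
definition star_cone :: "nat \<Rightarrow> nat \<Rightarrow> (nat \<Rightarrow> nat \<Rightarrow> complex) \<Rightarrow> (nat \<Rightarrow> complex) set" where
  "star_cone n r l = {v. (\<forall>j>n. v j = 0) \<and>
     (\<exists>S\<subseteq>{..<r}. card S = n \<and> (\<forall>i\<in>S. lin n (l i) v = 0))}"

definition has_apolar_star :: "nat \<Rightarrow> nat \<Rightarrow> cpoly \<Rightarrow> bool" where
  "has_apolar_star n r F \<longleftrightarrow>
     (\<exists>l. star_data n r l \<and> vanishing_ideal n (star_cone n r l) \<subseteq> perp n F)"

definition polyfun_on_forms :: "nat \<Rightarrow> nat \<Rightarrow> (cpoly \<Rightarrow> complex) \<Rightarrow> bool" where
  "polyfun_on_forms n d \<phi> \<longleftrightarrow>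
     (\<exists>E c. finite E \<and> (\<forall>F\<in>forms n d.
        \<phi> F = (\<Sum>e\<in>E. c e * (\<Prod>\<alpha>\<in>{\<alpha>\<in>mons n. mdeg n \<alpha> = d}. F \<alpha> ^ e \<alpha>))))"

definition zariski_open_forms :: "nat \<Rightarrow> nat \<Rightarrow> cpoly set \<Rightarrow> bool" where
  "zariski_open_forms n d U \<longleftrightarrow>
     (\<exists>H. (\<forall>\<phi>\<in>H. polyfun_on_forms n d \<phi>) \<and>
          U = {F\<in>forms n d. \<exists>\<phi>\<in>H. \<phi> F \<noteq> 0})"

definition general_form :: "nat \<Rightarrow> nat \<Rightarrow> (cpoly \<Rightarrow> bool) \<Rightarrow> bool" where
  "general_form n d P \<longleftrightarrow>
     (\<exists>U. zariski_open_forms n d U \<and> U \<noteq> {} \<and> (\<forall>F\<in>U. P F))"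

end

theory Submission
  imports Defs "Jordan_Normal_Form.Determinant" "HOL-Computational_Algebra.Fundamental_Theorem_Algebra"
begin

lemma exists_nontrivial_solution:
  fixes a :: "'q \<Rightarrow> 'u \<Rightarrow> 'a::field"
  assumes "finite Q" "finite U" "card Q < card U"
  shows "\<exists>x. (\<exists>u\<in>U. x u \<noteq> 0) \<and> (\<forall>q\<in>Q. (\<Sum>u\<in>U. a q u * x u) = 0)"
  using assms
proof (induction Q arbitrary: U a rule: finite_induct)
  case empty
  then obtain u0 where "u0 \<in> U" by fastforce
  then show ?case by (intro exI[of _ "\<lambda>u. if u = u0 then 1 else 0"]) auto
next
  case (insert q Q U a)
  show ?case
  proof (cases "\<forall>u\<in>U. a q u = 0")
    case True
    from insert.IH[of U a] insert.prems insert.hyps obtain x where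
      x: "\<exists>u\<in>U. x u \<noteq> 0" "\<forall>q\<in>Q. (\<Sum>u\<in>U. a q u * x u) = 0" by auto
    show ?thesis using x True by (intro exI[of _ x]) auto
  next
    case False
    then obtain u0 where u0: "u0 \<in> U" "a q u0 \<noteq> 0" by auto
    define U' where "U' = U - {u0}"
    define a' where "a' = (\<lambda>q' u. a q' u - a q' u0 * a q u / a q u0)"
    have cU': "card U' = card U - 1" using u0 insert.prems unfolding U'_def by auto
    have "card Q < card U'" using insert.prems insert.hyps cU' by auto
    then obtain x' where x': "\<exists>u\<in>U'. x' u \<noteq> 0" "\<forall>q\<in>Q. (\<Sum>u\<in>U'. a' q u * x' u) = 0"
      using insert.IH[of U' a'] insert.prems unfolding U'_def by auto
    define x where "x = (\<lambda>u. if u = u0 then -(\<Sum>u\<in>U'. a q u * x' u) / a q u0 else x' u)"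
    have split: "(\<Sum>u\<in>U. f u) = f u0 + (\<Sum>u\<in>U'. f u)" for f :: "'u \<Rightarrow> 'a"
      using u0 insert.prems unfolding U'_def by (simp add: sum.remove)
    have xU': "(\<Sum>u\<in>U'. g u * x u) = (\<Sum>u\<in>U'. g u * x' u)" for g
      by (rule sum.cong) (auto simp: x_def U'_def)
    have eq_q: "(\<Sum>u\<in>U. a q u * x u) = 0"
      unfolding split xU' using u0 by (simp add: x_def)
    have eq_Q: "(\<Sum>u\<in>U. a q' u * x u) = 0" if "q' \<in> Q" for q'
    proof -
      have "0 = (\<Sum>u\<in>U'. a' q' u * x' u)" using x' that by auto
      also have "\<dots> = (\<Sum>u\<in>U'. a q' u * x' u) - a q' u0 / a q u0 * (\<Sum>u\<in>U'. a q u * x' u)"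
        unfolding a'_def by (simp add: algebra_simps sum_subtractf sum_distrib_left)
      also have "\<dots> = (\<Sum>u\<in>U. a q' u * x u)"
        unfolding split xU' using u0 by (simp add: x_def)
      finally show ?thesis by simp
    qed
    have "\<exists>u\<in>U. x u \<noteq> 0" using x' unfolding U'_def x_def by auto
    then show ?thesis using eq_q eq_Q by (intro exI[of _ x]) auto
  qed
qed

lemma separation:
  fixes w :: "'s \<Rightarrow> 'b \<Rightarrow> 'a::field" and F :: "'b \<Rightarrow> 'a"
  assumes "finite S" "finite B"
  shows "(\<exists>c. \<forall>b\<in>B. F b = (\<Sum>s\<in>S. c s * w s b)) \<or>
         (\<exists>h. (\<forall>s\<in>S. (\<Sum>b\<in>B. h b * w s b) = 0) \<and> (\<Sum>b\<in>B. h b * F b) \<noteq> 0)"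
  using assms
proof (induction S arbitrary: F rule: finite_induct)
  case empty
  show ?case
  proof (cases "\<forall>b\<in>B. F b = 0")
    case True then show ?thesis by auto
  next
    case False
    then obtain b0 where b0: "b0 \<in> B" "F b0 \<noteq> 0" by auto
    have "(\<Sum>b\<in>B. (if b = b0 then 1 else 0) * F b) = F b0"
    proof -
      have "(\<Sum>b\<in>B. (if b = b0 then 1 else 0) * F b) = (\<Sum>b\<in>B. if b = b0 then F b else 0)"
        by (rule sum.cong) auto
      then show ?thesis using b0 empty by simp
    qed
    then show ?thesis using b0 by (intro disjI2 exI[of _ "\<lambda>b. if b = b0 then 1 else 0"]) auto
  qed
next
  case (insert s S F)
  note fin = insert.prems
  from insert.IH[OF fin, of F] show ?case
  proof
    assume "\<exists>c. \<forall>b\<in>B. F b = (\<Sum>s\<in>S. c s * w s b)"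
    then obtain c where c: "\<forall>b\<in>B. F b = (\<Sum>s\<in>S. c s * w s b)" by auto
    have "\<forall>b\<in>B. F b = (\<Sum>s'\<in>insert s S. (c(s := 0)) s' * w s' b)"
      using c insert.hyps by (auto intro!: sum.cong)
    then show ?thesis by blast
  next
    assume "\<exists>h. (\<forall>s\<in>S. (\<Sum>b\<in>B. h b * w s b) = 0) \<and> (\<Sum>b\<in>B. h b * F b) \<noteq> 0"
    then obtain h0 where h0: "\<forall>s\<in>S. (\<Sum>b\<in>B. h0 b * w s b) = 0" "(\<Sum>b\<in>B. h0 b * F b) \<noteq> 0" by auto
    show ?thesis
    proof (cases "(\<Sum>b\<in>B. h0 b * w s b) = 0")
      case True then show ?thesis using h0 by auto
    next
      case False
      define lam where "lam = (\<Sum>b\<in>B. h0 b * F b) / (\<Sum>b\<in>B. h0 b * w s b)"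
      define F' where "F' = (\<lambda>b. F b - lam * w s b)"
      from insert.IH[OF fin, of F'] show ?thesis
      proof
        assume "\<exists>c. \<forall>b\<in>B. F' b = (\<Sum>s\<in>S. c s * w s b)"
        then obtain c where c: "\<forall>b\<in>B. F' b = (\<Sum>s\<in>S. c s * w s b)" by auto
        have "(\<Sum>s'\<in>S. (c(s := lam)) s' * w s' b) = (\<Sum>s'\<in>S. c s' * w s' b)" for b
          using insert.hyps by (intro sum.cong) auto
        then have "\<forall>b\<in>B. F b = (\<Sum>s'\<in>insert s S. (c(s := lam)) s' * w s' b)"
          using c insert.hyps by (auto simp: F'_def algebra_simps)
        then show ?thesis by blast
      next
        assume "\<exists>h. (\<forall>s\<in>S. (\<Sum>b\<in>B. h b * w s b) = 0) \<and> (\<Sum>b\<in>B. h b * F' b) \<noteq> 0"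
        then obtain h1 where h1: "\<forall>s\<in>S. (\<Sum>b\<in>B. h1 b * w s b) = 0" "(\<Sum>b\<in>B. h1 b * F' b) \<noteq> 0" by auto
        define \<mu> where "\<mu> = (\<Sum>b\<in>B. h1 b * w s b) / (\<Sum>b\<in>B. h0 b * w s b)"
        define h where "h = (\<lambda>b. h1 b - \<mu> * h0 b)"
        have lin: "(\<Sum>b\<in>B. h b * g b) = (\<Sum>b\<in>B. h1 b * g b) - \<mu> * (\<Sum>b\<in>B. h0 b * g b)" for g
          unfolding h_def by (simp add: algebra_simps sum_subtractf sum_distrib_left)
        have "(\<Sum>b\<in>B. h b * w s b) = 0" unfolding lin \<mu>_def using False by simp
        moreover have "(\<Sum>b\<in>B. h b * w s' b) = 0" if "s' \<in> S" for s'
          unfolding lin using h0 h1 that by simp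
        moreover have "(\<Sum>b\<in>B. h b * F b) = (\<Sum>b\<in>B. h1 b * F' b)"
        proof -
          have "(\<Sum>b\<in>B. h1 b * F' b) = (\<Sum>b\<in>B. h1 b * F b) - lam * (\<Sum>b\<in>B. h1 b * w s b)"
            unfolding F'_def by (simp add: algebra_simps sum_subtractf sum_distrib_left)
          then show ?thesis unfolding lin \<mu>_def lam_def using False by (simp add: field_simps)
        qed
        ultimately show ?thesis using h1 by (intro disjI2 exI[of _ h]) auto
      qed
    qed
  qed
qed

definition mval :: "'v set \<Rightarrow> ('v \<Rightarrow> nat) \<Rightarrow> ('v \<Rightarrow> 'a::comm_semiring_1) \<Rightarrow> 'a" where
  "mval A e x = (\<Prod>a\<in>A. x a ^ e a)"

definition degA :: "'v set \<Rightarrow> ('v \<Rightarrow> nat) \<Rightarrow> nat" where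
  "degA A e = (\<Sum>a\<in>A. e a)"

definition monset :: "'v set \<Rightarrow> nat \<Rightarrow> ('v \<Rightarrow> nat) set" where
  "monset A k = {e. (\<forall>a. a \<notin> A \<longrightarrow> e a = 0) \<and> degA A e \<le> k}"

definition box :: "'v set \<Rightarrow> nat \<Rightarrow> ('v \<Rightarrow> nat) set" where
  "box A k = {e. \<forall>a. (a \<in> A \<longrightarrow> e a \<in> {..k}) \<and> (a \<notin> A \<longrightarrow> e a = 0)}"

definition is_poly :: "'v set \<Rightarrow> nat \<Rightarrow> (('v \<Rightarrow> complex) \<Rightarrow> complex) \<Rightarrow> bool" where
  "is_poly A k f \<longleftrightarrow> (\<exists>c. \<forall>x. f x = (\<Sum>e\<in>monset A k. c e * mval A e x))"

lemma finite_box: "finite A \<Longrightarrow> finite (box A k)"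
  unfolding box_def by (rule finite_set_of_finite_funs) auto

lemma monset_sub_box: "finite A \<Longrightarrow> monset A k \<subseteq> box A k"
proof
  fix e assume A: "finite A" and e: "e \<in> monset A k"
  have "e a \<le> k" if "a \<in> A" for a
  proof -
    have "e a \<le> degA A e" unfolding degA_def using A that by (intro member_le_sum) auto
    then show ?thesis using e by (auto simp: monset_def)
  qed
  then show "e \<in> box A k" using e by (auto simp: box_def monset_def)
qed

lemma finite_monset: "finite A \<Longrightarrow> finite (monset A k)"
  using finite_subset[OF monset_sub_box finite_box] by blast

lemma card_box: assumes "finite A" shows "card (box A k) = (k+1) ^ card A"
proof -
  have "bij_betw (\<lambda>e. restrict e A) (box A k) (PiE A (\<lambda>_. {..k}))"
  proof (rule bij_betw_byWitness[where f' = "\<lambda>f a. if a \<in> A then f a else 0"])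
    show "\<forall>a\<in>box A k. (\<lambda>a'. if a' \<in> A then restrict a A a' else 0) = a"
      by (auto simp: box_def fun_eq_iff)
    show "\<forall>a'\<in>PiE A (\<lambda>_. {..k}). restrict (\<lambda>a. if a \<in> A then a' a else 0) A = a'"
      by (auto simp: fun_eq_iff PiE_def extensional_def)
    show "(\<lambda>e. restrict e A) ` box A k \<subseteq> PiE A (\<lambda>_. {..k})"
      by (auto simp: box_def)
    show "(\<lambda>f a. if a \<in> A then f a else 0) ` PiE A (\<lambda>_. {..k}) \<subseteq> box A k"
      by (auto simp: box_def PiE_def Pi_def)
  qed
  then have "card (box A k) = card (PiE A (\<lambda>_. {..k::nat}))" by (rule bij_betw_same_card)
  also have "\<dots> = (k+1) ^ card A" using assms by (simp add: card_PiE)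
  finally show ?thesis .
qed

lemma card_monset_le: "finite A \<Longrightarrow> card (monset A k) \<le> (k+1) ^ card A"
  using card_mono[OF finite_box monset_sub_box] card_box by metis

lemma box_sub_monset: assumes "finite A" shows "box A t \<subseteq> monset A (card A * t)"
proof
  fix e assume e: "e \<in> box A t"
  have "degA A e \<le> (\<Sum>a\<in>A. t)" unfolding degA_def using e by (intro sum_mono) (auto simp: box_def)
  then show "e \<in> monset A (card A * t)" using e by (auto simp: monset_def box_def mult.commute)
qed

lemma card_monset_ge: "finite A \<Longrightarrow> (t+1) ^ card A \<le> card (monset A (card A * t))"
  using card_mono[OF finite_monset box_sub_monset] card_box by metis

lemma mval_cong: "(\<And>a. a \<in> A \<Longrightarrow> x a = y a) \<Longrightarrow> mval A e x = mval A e y"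
  unfolding mval_def by (rule prod.cong) auto

lemma mval_add: "mval A (\<lambda>a. e a + e' a) x = mval A e x * mval A e' x"
  unfolding mval_def by (simp add: power_add prod.distrib)

lemma sum_delta_mult: fixes g :: "'b \<Rightarrow> 'a::comm_semiring_1" assumes "finite S" "u \<in> S"
  shows "(\<Sum>e\<in>S. (if e = u then a else 0) * g e) = a * g u"
proof -
  have "(\<Sum>e\<in>S. (if e = u then a else 0) * g e) = (\<Sum>e\<in>S. if e = u then a * g e else 0)"
    by (rule sum.cong) auto
  then show ?thesis using assms by simp
qed

lemma is_poly_mono:
  assumes "finite A" "is_poly A k f" "k \<le> k'" shows "is_poly A k' f"
proof -
  obtain c where c: "\<And>x. f x = (\<Sum>e\<in>monset A k. c e * mval A e x)" using assms by (auto simp: is_poly_def)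
  have sub: "monset A k \<subseteq> monset A k'" using assms by (auto simp: monset_def)
  have "f x = (\<Sum>e\<in>monset A k'. (\<lambda>e. if e \<in> monset A k then c e else 0) e * mval A e x)" for x
    unfolding c by (rule sum.mono_neutral_cong_left) (use sub finite_monset[of A k'] assms(1) in auto)
  then show ?thesis unfolding is_poly_def by (intro exI[of _ "\<lambda>e. if e \<in> monset A k then c e else 0"]) auto
qed

lemma is_poly_const: assumes A: "finite A" shows "is_poly A k (\<lambda>x. a)"
proof -
  have z: "(\<lambda>_. 0) \<in> monset A k" by (auto simp: monset_def degA_def)
  have "(\<Sum>e\<in>monset A k. (\<lambda>e. if e = (\<lambda>_. 0) then a else 0) e * mval A e x) = a" for x
    using z by (simp add: sum_delta_mult[OF finite_monset[OF A]] mval_def)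
  then show ?thesis unfolding is_poly_def by (intro exI[of _ "\<lambda>e. if e = (\<lambda>_. 0) then a else 0"]) auto
qed

lemma is_poly_var: assumes "finite A" "a \<in> A" "1 \<le> k" shows "is_poly A k (\<lambda>x. x a)"
proof -
  let ?u = "\<lambda>b. if b = a then 1 else (0::nat)"
  have u: "?u \<in> monset A k" using assms by (auto simp: monset_def degA_def)
  have "mval A ?u x = x a" for x
  proof -
    have "mval A ?u x = (\<Prod>b\<in>A. if b = a then x a else 1)" unfolding mval_def by (rule prod.cong) auto
    also have "\<dots> = x a" using assms by (simp add: prod.delta)
    finally show ?thesis .
  qed
  then have eq: "(\<Sum>e\<in>monset A k. (\<lambda>e. if e = ?u then 1 else 0) e * mval A e x) = x a" for x
    using u by (simp add: sum_delta_mult[OF finite_monset[OF assms(1)]])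
  show ?thesis unfolding is_poly_def by (intro exI[of _ "\<lambda>e. if e = ?u then 1 else 0"] allI) (rule eq[symmetric])
qed

lemma is_poly_add: assumes "is_poly A k f" "is_poly A k g" shows "is_poly A k (\<lambda>x. f x + g x)"
proof -
  obtain c where c: "\<And>x. f x = (\<Sum>e\<in>monset A k. c e * mval A e x)" using assms by (auto simp: is_poly_def)
  obtain d where d: "\<And>x. g x = (\<Sum>e\<in>monset A k. d e * mval A e x)" using assms by (auto simp: is_poly_def)
  have "f x + g x = (\<Sum>e\<in>monset A k. (c e + d e) * mval A e x)" for x
    unfolding c d by (simp add: sum.distrib algebra_simps)
  then show ?thesis unfolding is_poly_def by (intro exI[of _ "\<lambda>e. c e + d e"]) auto
qed

lemma is_poly_smult: assumes "is_poly A k f" shows "is_poly A k (\<lambda>x. a * f x)"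
proof -
  obtain c where c: "\<And>x. f x = (\<Sum>e\<in>monset A k. c e * mval A e x)" using assms by (auto simp: is_poly_def)
  have "a * f x = (\<Sum>e\<in>monset A k. (a * c e) * mval A e x)" for x
    unfolding c by (simp add: sum_distrib_left algebra_simps)
  then show ?thesis unfolding is_poly_def by (intro exI[of _ "\<lambda>e. a * c e"]) auto
qed

lemma is_poly_sum: assumes A: "finite A" and "finite I" "\<And>i. i \<in> I \<Longrightarrow> is_poly A k (f i)"
  shows "is_poly A k (\<lambda>x. \<Sum>i\<in>I. f i x)"
  using assms(2,3) by (induction I rule: finite_induct) (auto intro: is_poly_add is_poly_const[OF A])

lemma is_poly_mult: assumes A: "finite A" and "is_poly A k f" "is_poly A k' g"
  shows "is_poly A (k + k') (\<lambda>x. f x * g x)"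
proof -
  obtain c where c: "\<And>x. f x = (\<Sum>e\<in>monset A k. c e * mval A e x)" using assms by (auto simp: is_poly_def)
  obtain d where d: "\<And>x. g x = (\<Sum>e\<in>monset A k'. d e * mval A e x)" using assms by (auto simp: is_poly_def)
  let ?P = "monset A k \<times> monset A k'"
  let ?s = "\<lambda>p. (\<lambda>a. fst p a + snd p a)"
  have fP: "finite ?P" using finite_monset[OF A] by auto
  have img: "?s ` ?P \<subseteq> monset A (k + k')"
    by (auto simp: monset_def degA_def sum.distrib add_mono)
  define cd where "cd = (\<lambda>e. \<Sum>p\<in>{p\<in>?P. ?s p = e}. c (fst p) * d (snd p))"
  have "f x * g x = (\<Sum>e\<in>monset A (k+k'). cd e * mval A e x)" for x
  proof -
    have "f x * g x = (\<Sum>p\<in>?P. c (fst p) * d (snd p) * mval A (?s p) x)"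
      unfolding c d sum_product sum.cartesian_product mval_add by (rule sum.cong) auto
    also have "\<dots> = (\<Sum>e\<in>monset A (k+k'). \<Sum>p\<in>{p\<in>?P. ?s p = e}. c (fst p) * d (snd p) * mval A (?s p) x)"
      by (rule sum.group[symmetric, OF fP finite_monset[OF A] img])
    also have "\<dots> = (\<Sum>e\<in>monset A (k+k'). cd e * mval A e x)"
      unfolding cd_def sum_distrib_right by (intro sum.cong refl) auto
    finally show ?thesis .
  qed
  then show ?thesis unfolding is_poly_def by (intro exI[of _ "cd"]) auto
qed

lemma is_poly_prod: assumes A: "finite A" and "finite I" "\<And>i. i \<in> I \<Longrightarrow> is_poly A (k i) (f i)"
  shows "is_poly A (\<Sum>i\<in>I. k i) (\<lambda>x. \<Prod>i\<in>I. f i x)"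
  using assms(2,3)
proof (induction I rule: finite_induct)
  case empty then show ?case by (simp add: is_poly_const[OF A])
next
  case (insert i I)
  then show ?case using is_poly_mult[OF A, of "k i" "f i" "\<Sum>i\<in>I. k i"] by simp
qed

lemma is_poly_power: assumes A: "finite A" and "is_poly A k f"
  shows "is_poly A (k * m) (\<lambda>x. f x ^ m)"
  using is_poly_prod[OF A, of "{..<m}" "\<lambda>_. k" "\<lambda>_. f"] assms by (simp add: mult.commute)

lemma is_poly_mval: assumes A: "finite A" "finite B" and "\<And>b. b \<in> B \<Longrightarrow> is_poly A k (\<lambda>x. \<Phi> x b)"
  shows "is_poly A (k * degA B e) (\<lambda>x. mval B e (\<Phi> x))"
  unfolding mval_def degA_def sum_distrib_left
  by (rule is_poly_prod[OF A(1) A(2)]) (use is_poly_power[OF A(1)] assms(3) in auto)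

lemma mval_insert: "finite A \<Longrightarrow> a \<notin> A \<Longrightarrow> mval (insert a A) e x = x a ^ e a * mval A e x"
  unfolding mval_def by simp

lemma poly_zero_coeffs:
  fixes c :: "('v \<Rightarrow> nat) \<Rightarrow> complex"
  assumes "finite A" "finite E" "\<forall>e\<in>E. \<forall>a. a \<notin> A \<longrightarrow> e a = 0"
    "\<forall>x::'v\<Rightarrow>complex. (\<Sum>e\<in>E. c e * mval A e x) = 0"
  shows "\<forall>e\<in>E. c e = 0"
  using assms
proof (induction A arbitrary: E c rule: finite_induct)
  case empty
  show ?case
  proof
    fix e assume e: "e \<in> E"
    have z: "f = (\<lambda>_. 0)" if "f \<in> E" for f using empty.prems(2) that by (simp add: fun_eq_iff)
    have "E \<subseteq> {e}" using z e by blast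
    then have "E = {e}" using e by auto
    then show "c e = 0" using empty.prems z[OF e] by (simp add: mval_def)
  qed
next
  case (insert a A E c)
  show ?case
  proof
    fix e0 assume e0: "e0 \<in> E"
    define m where "m = e0 a"
    let ?Em = "{e\<in>E. e a = m}"
    have coeff: "(\<Sum>e\<in>?Em. c e * mval A e x) = 0" for x
    proof -
      define Q where "Q = (\<Sum>e\<in>E. monom (c e * mval A e x) (e a))"
      have "poly Q z = 0" for z
      proof -
        have "poly Q z = (\<Sum>e\<in>E. c e * mval (insert a A) e (x(a := z)))"
          unfolding Q_def poly_sum poly_monom
        proof (rule sum.cong[OF refl])
          fix e assume "e \<in> E"
          have "mval A e (x(a := z)) = mval A e x" using insert.hyps by (intro mval_cong) auto
          then show "c e * mval A e x * z ^ e a = c e * mval (insert a A) e (x(a := z))"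
            using insert.hyps by (simp add: mval_insert)
        qed
        also have "\<dots> = 0" using insert.prems by auto
        finally show ?thesis .
      qed
      then have "Q = 0" using poly_all_0_iff_0 by blast
      then have "0 = coeff Q m" by simp
      also have "\<dots> = (\<Sum>e\<in>E. if e a = m then c e * mval A e x else 0)"
        unfolding Q_def coeff_sum coeff_monom by (rule sum.cong) auto
      also have "\<dots> = (\<Sum>e\<in>?Em. c e * mval A e x)"
        using insert.prems by (simp add: sum.inter_filter)
      finally show ?thesis by simp
    qed
    let ?r = "\<lambda>e::'v\<Rightarrow>nat. e(a := 0)"
    have inj: "inj_on ?r ?Em"
    proof (rule inj_onI)
      fix e f assume "e \<in> ?Em" "f \<in> ?Em" "e(a := 0) = f(a := 0)"
      then have "(e(a := 0))(a := m) = (f(a := 0))(a := m)" by simp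
      moreover have "(e(a := 0))(a := m) = e" "(f(a := 0))(a := m) = f" using \<open>e \<in> ?Em\<close> \<open>f \<in> ?Em\<close>
        by (auto simp: fun_eq_iff)
      ultimately show "e = f" by simp
    qed
    have IH: "\<forall>e'\<in>?r ` ?Em. (\<lambda>e'. c (e'(a := m))) e' = 0"
    proof (rule insert.IH)
      show "finite (?r ` ?Em)" using insert.prems by auto
      show "\<forall>e\<in>?r ` ?Em. \<forall>b. b \<notin> A \<longrightarrow> e b = 0" using insert.prems by auto
      show "\<forall>x. (\<Sum>e\<in>?r ` ?Em. c (e(a := m)) * mval A e x) = 0"
      proof
        fix x
        have "(\<Sum>e\<in>?r ` ?Em. c (e(a := m)) * mval A e x) = (\<Sum>e\<in>?Em. c ((e(a:=0))(a := m)) * mval A (e(a:=0)) x)"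
          by (rule sum.reindex[OF inj, unfolded comp_def])
        also have "\<dots> = (\<Sum>e\<in>?Em. c e * mval A e x)"
        proof (rule sum.cong[OF refl])
          fix e assume e: "e \<in> ?Em"
          have "(e(a:=0))(a := m) = e" using e by (auto simp: fun_eq_iff)
          moreover have "mval A (e(a:=0)) x = mval A e x" unfolding mval_def using insert.hyps
            by (intro prod.cong) auto
          ultimately show "c ((e(a:=0))(a := m)) * mval A (e(a:=0)) x = c e * mval A e x" by simp
        qed
        also have "\<dots> = 0" by (rule coeff)
        finally show "(\<Sum>e\<in>?r ` ?Em. c (e(a := m)) * mval A e x) = 0" .
      qed
    qed
    have "e0 \<in> ?Em" using e0 m_def by auto
    then have "c ((e0(a:=0))(a := m)) = 0" using IH by auto
    moreover have "(e0(a:=0))(a := m) = e0" by (auto simp: fun_eq_iff m_def)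
    ultimately show "c e0 = 0" by simp
  qed
qed

lemma arith_count:
  fixes cJ k M m :: nat
  assumes "m < M"
  defines "t \<equiv> cJ * (k*M+1)^m"
  shows "cJ * (k*(M*t)+1)^m < (t+1)^M"
proof -
  have "k*(M*t)+1 \<le> (k*M+1)*(t+1)" by (simp add: algebra_simps)
  then have "(k*(M*t)+1)^m \<le> ((k*M+1)*(t+1))^m" by (rule power_mono) simp
  then have "cJ * (k*(M*t)+1)^m \<le> cJ * ((k*M+1)^m * (t+1)^m)"
    unfolding power_mult_distrib by (rule mult_left_mono) simp
  also have "\<dots> = t * (t+1)^m" by (simp add: t_def)
  also have "\<dots> < (t+1) * (t+1)^m" by simp
  also have "\<dots> = (t+1)^(Suc m)" by simp
  also have "\<dots> \<le> (t+1)^M" using assms by (intro power_increasing) auto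
  finally show ?thesis .
qed

lemma annihilating_poly:
  fixes \<Phi> :: "'j \<Rightarrow> ('v \<Rightarrow> complex) \<Rightarrow> 'w \<Rightarrow> complex" and A :: "'j \<Rightarrow> 'v set"
  assumes J: "finite J" and B: "finite B" and A: "\<And>j. j \<in> J \<Longrightarrow> finite (A j) \<and> card (A j) \<le> m"
    and mB: "m < card B"
    and P: "\<And>j b. j \<in> J \<Longrightarrow> b \<in> B \<Longrightarrow> is_poly (A j) k (\<lambda>x. \<Phi> j x b)"
  shows "\<exists>D c. (\<exists>e\<in>monset B D. c e \<noteq> 0) \<and>
     (\<forall>j\<in>J. \<forall>x. (\<Sum>e\<in>monset B D. c e * mval B e (\<Phi> j x)) = 0)"
proof -
  define M where "M = card B"
  define t where "t = card J * (k*M+1)^m"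
  define D where "D = M * t"
  define U where "U = monset B D"
  have ex: "\<forall>p\<in>J \<times> U. \<exists>cf. \<forall>x. mval B (snd p) (\<Phi> (fst p) x) =
           (\<Sum>\<beta>\<in>monset (A (fst p)) (k*D). cf \<beta> * mval (A (fst p)) \<beta> x)"
  proof
    fix p assume p: "p \<in> J \<times> U"
    then have fA: "finite (A (fst p))" using A by auto
    have "is_poly (A (fst p)) (k * degA B (snd p)) (\<lambda>x. mval B (snd p) (\<Phi> (fst p) x))"
      using p by (intro is_poly_mval[OF fA B]) (auto intro: P)
    moreover have "k * degA B (snd p) \<le> k * D" using p by (auto simp: U_def monset_def)
    ultimately have "is_poly (A (fst p)) (k*D) (\<lambda>x. mval B (snd p) (\<Phi> (fst p) x))"
      by (rule is_poly_mono[OF fA])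
    then show "\<exists>cf. \<forall>x. mval B (snd p) (\<Phi> (fst p) x) =
           (\<Sum>\<beta>\<in>monset (A (fst p)) (k*D). cf \<beta> * mval (A (fst p)) \<beta> x)"
      unfolding is_poly_def by simp
  qed
  obtain co where co0: "\<forall>p\<in>J \<times> U. \<forall>x. mval B (snd p) (\<Phi> (fst p) x) =
           (\<Sum>\<beta>\<in>monset (A (fst p)) (k*D). co p \<beta> * mval (A (fst p)) \<beta> x)"
    using bchoice[OF ex] by (elim exE) (erule that)
  have co: "\<And>p x. p \<in> J \<times> U \<Longrightarrow> mval B (snd p) (\<Phi> (fst p) x) =
           (\<Sum>\<beta>\<in>monset (A (fst p)) (k*D). co p \<beta> * mval (A (fst p)) \<beta> x)"
    using co0 by blast
  define Q where "Q = Sigma J (\<lambda>j. monset (A j) (k*D))"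
  have fQ: "finite Q" unfolding Q_def using J A finite_monset by (intro finite_SigmaI) auto
  have fU: "finite U" unfolding U_def using finite_monset[OF B] .
  have "card Q = (\<Sum>j\<in>J. card (monset (A j) (k*D)))"
    unfolding Q_def using J A finite_monset by (subst card_SigmaI) auto
  also have "\<dots> \<le> (\<Sum>j\<in>J. (k*D+1)^m)"
  proof (rule sum_mono)
    fix j assume j: "j \<in> J"
    have "card (monset (A j) (k*D)) \<le> (k*D+1) ^ card (A j)" using A j card_monset_le by blast
    also have "\<dots> \<le> (k*D+1)^m" using A j by (intro power_increasing) auto
    finally show "card (monset (A j) (k*D)) \<le> (k*D+1)^m" .
  qed
  also have "\<dots> = card J * (k*(M*t)+1)^m" by (simp add: D_def)
  also have "\<dots> < (t+1)^M" unfolding t_def using mB M_def by (intro arith_count) auto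
  also have "\<dots> \<le> card U" unfolding U_def D_def M_def using card_monset_ge[OF B] by (simp add: mult.commute)
  finally have "card Q < card U" .
  from exists_nontrivial_solution[OF fQ fU this, of "\<lambda>q e. co (fst q, e) (snd q)"]
  obtain c where c: "\<exists>u\<in>U. c u \<noteq> 0"
    "\<forall>q\<in>Q. (\<Sum>e\<in>U. co (fst q, e) (snd q) * c e) = 0" by blast
  have "(\<Sum>e\<in>U. c e * mval B e (\<Phi> j x)) = 0" if j: "j \<in> J" for j x
  proof -
    have "(\<Sum>e\<in>U. c e * mval B e (\<Phi> j x)) =
       (\<Sum>e\<in>U. c e * (\<Sum>\<beta>\<in>monset (A j) (k*D). co (j,e) \<beta> * mval (A j) \<beta> x))"
      using co[of "(j, _)" x] j by (intro sum.cong) auto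
    also have "\<dots> = (\<Sum>\<beta>\<in>monset (A j) (k*D). (\<Sum>e\<in>U. co (j,e) \<beta> * c e) * mval (A j) \<beta> x)"
      unfolding sum_distrib_left sum_distrib_right
      by (subst sum.swap) (simp add: mult_ac)
    also have "\<dots> = 0" using c(2) j by (intro sum.neutral) (auto simp: Q_def)
    finally show ?thesis .
  qed
  then show ?thesis using c(1) unfolding U_def by (intro exI[of _ D] exI[of _ c]) auto
qed

lemma poly_sum_upto:
  fixes p :: "'a::comm_semiring_1 poly"
  assumes "degree p \<le> n" shows "poly p x = (\<Sum>j\<le>n. coeff p j * x ^ j)"
  unfolding poly_altdef
  by (rule sum.mono_neutral_left) (use assms in \<open>auto simp: coeff_eq_0\<close>)

definition vl :: "nat \<Rightarrow> nat \<Rightarrow> complex" where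
  "vl i j = (of_nat i) ^ j"

lemma lin_poly: "degree p \<le> n \<Longrightarrow> lin n (vl i) (\<lambda>j. coeff p j) = poly p (of_nat i)"
  unfolding lin_def vl_def by (subst poly_sum_upto[of p n]) (auto simp: mult.commute)

lemma degree_prod_linear: "degree (\<Prod>k\<in>K. [:- s k, 1::'a::comm_ring_1:]) \<le> card K"
proof -
  have "degree (\<Prod>k\<in>K. [:- s k, 1::'a:]) \<le> (\<Sum>k\<in>K. degree [:- s k, 1::'a:])"
    by (cases "finite K") (use degree_prod_sum_le[of K "\<lambda>k. [:- s k, 1::'a:]"] in \<open>auto simp: o_def\<close>)
  also have "\<dots> \<le> (\<Sum>k\<in>K. 1)" by (intro sum_mono) auto
  finally show ?thesis by simp
qed

lemma vl_star_data: "star_data n r vl"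
  unfolding star_data_def lin_indep_on_def
proof (intro allI impI ballI)
  fix S c k
  assume S: "S \<subseteq> {..<r}" "card S \<le> n + 1"
    and c: "\<forall>j\<le>n. (\<Sum>i\<in>S. c i * vl i j) = 0" and k: "k \<in> S"
  have fS: "finite S" using S finite_subset by blast
  define Q where "Q = (\<Prod>i\<in>S - {k}. [:- of_nat i, 1::complex:])"
  have dQ: "degree Q \<le> n"
    using degree_prod_linear[of "\<lambda>i. of_nat i :: complex" "S - {k}"] S k fS unfolding Q_def by auto
  have "0 = (\<Sum>j\<le>n. coeff Q j * (\<Sum>i\<in>S. c i * vl i j))" using c by simp
  also have "\<dots> = (\<Sum>i\<in>S. c i * (\<Sum>j\<le>n. coeff Q j * of_nat i ^ j))"
    unfolding sum_distrib_left vl_def by (subst sum.swap) (simp add: mult_ac)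
  also have "\<dots> = (\<Sum>i\<in>S. c i * poly Q (of_nat i))"
    using poly_sum_upto[OF dQ] by simp
  also have "\<dots> = c k * poly Q (of_nat k)"
  proof (rule sum.remove[OF fS k, THEN trans])
    have "poly Q (of_nat i) = 0" if "i \<in> S - {k}" for i
      unfolding Q_def poly_prod using that fS by (intro prod_zero) auto
    then show "c k * poly Q (of_nat k) + (\<Sum>i\<in>S - {k}. c i * poly Q (of_nat i)) = c k * poly Q (of_nat k)"
      by simp
  qed
  finally have "c k * poly Q (of_nat k) = 0" by simp
  moreover have "poly Q (of_nat k) \<noteq> 0" unfolding Q_def poly_prod using fS by auto
  ultimately show "c k = 0" by simp
qed

definition cv :: "nat \<Rightarrow> (nat \<Rightarrow> complex) \<Rightarrow> nat \<Rightarrow> complex" where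
  "cv n s = (\<lambda>j. coeff (\<Prod>k<n. [:- s k, 1:]) j)"

lemma cv_in_cone:
  assumes sub: "s ` {..<n} \<subseteq> of_nat ` {..<r}" and inj: "inj_on s {..<n}"
  shows "cv n s \<in> star_cone n r vl"
proof -
  let ?P = "\<Prod>k<n. [:- s k, 1::complex:]"
  have dP: "degree ?P \<le> n" using degree_prod_linear[of s "{..<n}"] by simp
  define S where "S = {i\<in>{..<r}. of_nat i \<in> s ` {..<n}}"
  have "s ` {..<n} \<subseteq> of_nat ` S"
  proof
    fix y assume y: "y \<in> s ` {..<n}"
    then obtain i where "i < r" "y = of_nat i" using sub by auto
    then show "y \<in> of_nat ` S" using y unfolding S_def by auto
  qed
  then have "of_nat ` S = s ` {..<n}" unfolding S_def by auto
  moreover have "inj_on (of_nat :: nat \<Rightarrow> complex) S" by (auto intro: inj_onI)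
  ultimately have "card S = card (s ` {..<n})" by (metis card_image)
  also have "\<dots> = n" using inj by (simp add: card_image)
  finally have cS: "card S = n" .
  have "lin n (vl i) (cv n s) = 0" if iS: "i \<in> S" for i
  proof -
    obtain k where k: "k < n" "of_nat i = s k" using iS unfolding S_def by auto
    have "lin n (vl i) (cv n s) = poly ?P (of_nat i)" unfolding cv_def by (rule lin_poly[OF dP])
    also have "\<dots> = 0" unfolding poly_prod using k by (intro prod_zero) auto
    finally show ?thesis .
  qed
  moreover have "\<forall>j>n. cv n s j = 0" unfolding cv_def using dP by (auto intro: coeff_eq_0)
  moreover have "S \<subseteq> {..<r}" by (auto simp: S_def)
  ultimately show ?thesis unfolding star_cone_def using cS by blast
qed

lemma cone_scale: "v \<in> star_cone n r l \<Longrightarrow> (\<lambda>i. t * v i) \<in> star_cone n r l"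
  unfolding star_cone_def lin_def by (auto simp: sum_distrib_left[symmetric] mult_ac)

definition hom_val :: "nat \<Rightarrow> cpoly \<Rightarrow> nat \<Rightarrow> (nat \<Rightarrow> complex) \<Rightarrow> complex" where
  "hom_val n g e v = (\<Sum>\<beta>\<in>{\<beta>\<in>supp g. mdeg n \<beta> = e}. g \<beta> * (\<Prod>i\<le>n. v i ^ \<beta> i))"

lemma prod_scale: "(\<Prod>i\<le>n. (t * v i) ^ \<beta> i) = t ^ mdeg n \<beta> * (\<Prod>i\<le>n. v i ^ \<beta> i)"
  unfolding mdeg_def power_mult_distrib prod.distrib by (simp add: power_sum)

lemma hom_val_scale: "hom_val n g e (\<lambda>i. t * v i) = t ^ e * hom_val n g e v"
  unfolding hom_val_def prod_scale sum_distrib_left by (rule sum.cong) auto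

lemma hom_val_zero_on_cone:
  assumes g: "g \<in> polys n" and Z: "\<And>t v. v \<in> Z \<Longrightarrow> (\<lambda>i. t * v i) \<in> Z"
    and van: "\<And>v. v \<in> Z \<Longrightarrow> peval n g v = 0" and v: "v \<in> Z"
  shows "hom_val n g e v = 0"
proof -
  have fin: "finite (supp g)" using g by (auto simp: polys_def)
  define Q where "Q = (\<Sum>\<beta>\<in>supp g. monom (g \<beta> * (\<Prod>i\<le>n. v i ^ \<beta> i)) (mdeg n \<beta>))"
  have "poly Q t = peval n g (\<lambda>i. t * v i)" for t
    unfolding Q_def poly_sum poly_monom peval_def prod_scale by (rule sum.cong) (auto simp: mult_ac)
  then have "poly Q t = 0" for t using van Z v by simp
  then have "Q = 0" using poly_all_0_iff_0 by blast
  then have "0 = coeff Q e" by simp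
  also have "\<dots> = (\<Sum>\<beta>\<in>supp g. if mdeg n \<beta> = e then g \<beta> * (\<Prod>i\<le>n. v i ^ \<beta> i) else 0)"
    unfolding Q_def coeff_sum coeff_monom by (rule sum.cong) auto
  also have "\<dots> = hom_val n g e v" unfolding hom_val_def using fin by (simp add: sum.inter_filter)
  finally show ?thesis by simp
qed

lemma affine_poly:
  fixes g :: "cpoly"
  assumes "finite G" "\<forall>\<beta>\<in>G. mdeg n \<beta> \<le> e"
  shows "\<exists>P. degree P \<le> e \<and> (\<forall>z. (\<Sum>\<beta>\<in>G. g \<beta> * (\<Prod>i\<le>n. (a i + z * b i) ^ \<beta> i)) = poly P z)"
proof -
  define P where "P = (\<Sum>\<beta>\<in>G. Polynomial.smult (g \<beta>) (\<Prod>i\<le>n. [:a i, b i:] ^ \<beta> i))"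
  have "degree P \<le> e" unfolding P_def
  proof (rule degree_sum_le[OF assms(1)])
    fix \<beta> assume \<beta>: "\<beta> \<in> G"
    have "degree (Polynomial.smult (g \<beta>) (\<Prod>i\<le>n. [:a i, b i:] ^ \<beta> i)) \<le> degree (\<Prod>i\<le>n. [:a i, b i:] ^ \<beta> i)"
      by (rule degree_smult_le)
    also have "\<dots> \<le> (\<Sum>i\<le>n. degree ([:a i, b i:] ^ \<beta> i))"
      by (rule degree_prod_sum_le[THEN order_trans]) (auto simp: o_def)
    also have "\<dots> \<le> (\<Sum>i\<le>n. \<beta> i)"
    proof (rule sum_mono)
      fix i
      have "degree ([:a i, b i:] ^ \<beta> i) \<le> degree [:a i, b i:] * \<beta> i" by (rule degree_power_le)
      also have "\<dots> \<le> 1 * \<beta> i" by (intro mult_right_mono) auto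
      finally show "degree ([:a i, b i:] ^ \<beta> i) \<le> \<beta> i" by simp
    qed
    also have "\<dots> \<le> e" using assms \<beta> by (auto simp: mdeg_def)
    finally show "degree (Polynomial.smult (g \<beta>) (\<Prod>i\<le>n. [:a i, b i:] ^ \<beta> i)) \<le> e" .
  qed
  moreover have "(\<Sum>\<beta>\<in>G. g \<beta> * (\<Prod>i\<le>n. (a i + z * b i) ^ \<beta> i)) = poly P z" for z
    unfolding P_def by (simp add: poly_sum poly_prod poly_power mult_ac)
  ultimately show ?thesis by blast
qed

lemma hom_val_affine:
  assumes "finite (supp g)"
  shows "\<exists>P. degree P \<le> e \<and> (\<forall>z. hom_val n g e (\<lambda>i. a i + z * b i) = poly P z)"
  unfolding hom_val_def by (rule affine_poly) (use assms in auto)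

lemma vanish_induction:
  fixes H :: "(nat \<Rightarrow> complex) \<Rightarrow> complex"
  assumes aff: "\<And>s k. \<exists>P. degree P \<le> e \<and> (\<forall>z. H (s(k := z)) = poly P z)"
    and T: "e + n \<le> card T"
    and base: "\<And>s. s ` {..<n} \<subseteq> T \<Longrightarrow> inj_on s {..<n} \<Longrightarrow> H s = 0"
  shows "H s = 0"
proof -
  have claim: "\<forall>s. s ` {k..<n} \<subseteq> T \<and> inj_on s {k..<n} \<longrightarrow> H s = 0" if "k \<le> n" for k
    using that
  proof (induction k)
    case 0 then show ?case using base by (auto simp: atLeast0LessThan)
  next
    case (Suc k)
    show ?case
    proof (intro allI impI)
      fix s assume s: "s ` {Suc k..<n} \<subseteq> T \<and> inj_on s {Suc k..<n}"
      obtain P where P: "degree P \<le> e" "\<And>z. H (s(k := z)) = poly P z" using aff[of s k] by blast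
      define R where "R = T - s ` {Suc k..<n}"
      have "card (s ` {Suc k..<n}) \<le> n - Suc k" using card_image_le[of "{Suc k..<n}" s] by simp
      then have cR: "card R \<ge> card T - (n - Suc k)" unfolding R_def
        using diff_card_le_card_Diff[OF finite_imageI[of "{Suc k..<n}" s]] by (meson diff_le_mono2 finite_atLeastLessThan le_trans)
      have "poly P z = 0" if z: "z \<in> R" for z
      proof -
        have "(s(k := z)) ` {k..<n} \<subseteq> T"
          using s z Suc.prems unfolding R_def by (auto simp: image_subset_iff)
        moreover have "inj_on (s(k := z)) {k..<n}"
        proof -
          have "{k..<n} = insert k {Suc k..<n}" using Suc.prems by auto
          moreover have "inj_on (s(k := z)) {Suc k..<n}" using s by (auto simp: inj_on_def)
          moreover have "z \<notin> (s(k := z)) ` {Suc k..<n}" using z unfolding R_def by auto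
          ultimately show ?thesis by auto
        qed
        ultimately have "H (s(k := z)) = 0" using Suc.IH Suc.prems by auto
        then show ?thesis using P by simp
      qed
      then have "P = 0"
        using poly_eqI_degree[of R P 0] P(1) cR T Suc.prems by fastforce
      moreover have "H (s(k := s k)) = poly P (s k)" by (rule P(2))
      ultimately show "H s = 0" by simp
    qed
  qed
  show ?thesis using claim[of n] by simp
qed

lemma hom_val_cong: "(\<And>i. i \<le> n \<Longrightarrow> v i = w i) \<Longrightarrow> hom_val n g e v = hom_val n g e w"
  unfolding hom_val_def by (intro sum.cong refl arg_cong2[where f = "(*)"] prod.cong) auto

lemma H_affine:
  assumes fin: "finite (supp g)"
  shows "\<exists>P. degree P \<le> e \<and> (\<forall>z. hom_val n g e (cv n (s(k := z))) = poly P z)"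
proof (cases "k < n")
  case True
  define R where "R = (\<Prod>k'\<in>{..<n} - {k}. [:- s k', 1::complex:])"
  have "cv n (s(k := z)) = (\<lambda>j. coeff (pCons 0 R) j + z * (- coeff R j))" for z
  proof -
    have "(\<Prod>k'<n. [:- (s(k := z)) k', 1::complex:]) = [:- z, 1:] * (\<Prod>k'\<in>{..<n} - {k}. [:- (s(k := z)) k', 1::complex:])"
      using True by (subst prod.remove[of _ k]) auto
    also have "(\<Prod>k'\<in>{..<n} - {k}. [:- (s(k := z)) k', 1::complex:]) = R"
      unfolding R_def by (rule prod.cong) auto
    finally have pe: "(\<Prod>k'<n. [:- (s(k := z)) k', 1::complex:]) = R * [:- z, 1:]" by (simp add: mult.commute)
    have eq2: "R * [:- z, 1:] = Polynomial.smult (-z) R + pCons 0 R" by simp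
    show ?thesis unfolding cv_def pe eq2 by (simp add: fun_eq_iff algebra_simps)
  qed
  then show ?thesis using hom_val_affine[OF fin, of e n "\<lambda>j. coeff (pCons 0 R) j" "\<lambda>j. - coeff R j"] by simp
next
  case False
  have "cv n (s(k := z)) = cv n s" for z unfolding cv_def using False by (intro ext arg_cong2[where f = coeff] prod.cong) auto
  then show ?thesis by (intro exI[of _ "[:hom_val n g e (cv n s):]"]) auto
qed

lemma comp_zero_all:
  assumes g: "g \<in> vanishing_ideal n (star_cone n r vl)" and er: "e + n \<le> r"
  shows "hom_val n g e (cv n s) = 0"
proof -
  have gp: "g \<in> polys n" and van: "\<And>v. v \<in> star_cone n r vl \<Longrightarrow> peval n g v = 0"
    using g by (auto simp: vanishing_ideal_def)
  have fin: "finite (supp g)" using gp by (auto simp: polys_def)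
  have cT: "card (of_nat ` {..<r} :: complex set) = r" by (simp add: card_image inj_on_def)
  show ?thesis
  proof (rule vanish_induction[where H = "\<lambda>s. hom_val n g e (cv n s)" and e = e and n = n and T = "of_nat ` {..<r}"])
    show "\<exists>P. degree P \<le> e \<and> (\<forall>z. hom_val n g e (cv n (s(k := z))) = poly P z)" for s k
      by (rule H_affine[OF fin])
    show "e + n \<le> card (of_nat ` {..<r} :: complex set)" using cT er by simp
    show "hom_val n g e (cv n s) = 0" if "s ` {..<n} \<subseteq> of_nat ` {..<r}" "inj_on s {..<n}" for s
      using hom_val_zero_on_cone[OF gp cone_scale van cv_in_cone[OF that]] by blast
  qed
qed

lemma zero_monic:
  assumes g: "g \<in> vanishing_ideal n (star_cone n r vl)" and er: "e + n \<le> r" and v: "v n = 1"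
  shows "hom_val n g e v = 0"
proof -
  define p where "p = (\<Sum>j\<le>n. monom (v j) j)"
  have cp: "coeff p j = (if j \<le> n then v j else 0)" for j
    unfolding p_def coeff_sum coeff_monom by (cases "j \<le> n") auto
  have "degree p \<le> n" by (rule degree_le) (auto simp: cp)
  moreover have "n \<le> degree p" by (rule le_degree) (simp add: cp v)
  ultimately have dp: "degree p = n" by simp
  have lc: "lead_coeff p = 1" using dp cp v by simp
  obtain root where "Polynomial.smult (lead_coeff p) (\<Prod>i<degree p. [:-root i, 1:]) = p"
    by (rule complex_poly_decompose')
  then have pr: "(\<Prod>i<n. [:-root i, 1:]) = p" using lc dp by simp
  have "hom_val n g e v = hom_val n g e (cv n root)"
    by (rule hom_val_cong) (simp add: cv_def pr cp)
  also have "\<dots> = 0" by (rule comp_zero_all[OF g er])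
  finally show ?thesis .
qed

lemma zero_all:
  assumes g: "g \<in> vanishing_ideal n (star_cone n r vl)" and er: "e + n \<le> r"
  shows "hom_val n g e v = 0"
proof -
  have fin: "finite (supp g)" using g by (auto simp: polys_def vanishing_ideal_def)
  have nz: "hom_val n g e w = 0" if "w n \<noteq> 0" for w
  proof -
    have "hom_val n g e w = hom_val n g e (\<lambda>i. w n * (w i / w n))" using that by simp
    also have "\<dots> = w n ^ e * hom_val n g e (\<lambda>i. w i / w n)" by (rule hom_val_scale)
    also have "hom_val n g e (\<lambda>i. w i / w n) = 0" using that by (intro zero_monic[OF g er]) simp
    finally show ?thesis by simp
  qed
  show ?thesis
  proof (cases "v n = 0")
    case False then show ?thesis by (rule nz)
  next
    case True
    obtain P where P: "\<And>z. hom_val n g e (\<lambda>i. v i + z * (if i = n then 1 else 0)) = poly P z"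
      using hom_val_affine[OF fin, of e n v "\<lambda>i. if i = n then 1 else 0"] by blast
    have "poly P z = 0" if "z \<noteq> 0" for z
      using P[of z, symmetric] nz[of "\<lambda>i. v i + z * (if i = n then 1 else 0)"] that True by simp
    then have "UNIV - {0} \<subseteq> {z. poly P z = 0}" by auto
    moreover have "infinite (UNIV - {0::complex})" by (simp add: infinite_UNIV_char_0)
    ultimately have "P = 0" using poly_roots_finite finite_subset by blast
    moreover have "hom_val n g e v = poly P 0" using P[of 0] by simp
    ultimately show ?thesis by simp
  qed
qed

lemma low_coeffs_zero:
  assumes g: "g \<in> vanishing_ideal n (star_cone n r vl)" and er: "e + n \<le> r"
    and \<beta>: "\<beta> \<in> supp g"
  shows "mdeg n \<beta> \<noteq> e"
proof
  assume deg: "mdeg n \<beta> = e"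
  have gp: "g \<in> polys n" using g by (auto simp: vanishing_ideal_def)
  let ?E = "{\<beta>\<in>supp g. mdeg n \<beta> = e}"
  have "\<forall>\<beta>\<in>?E. g \<beta> = 0"
  proof (rule poly_zero_coeffs[of "{..n}"])
    show "finite {..n}" by simp
    show "finite ?E" using gp by (auto simp: polys_def)
    show "\<forall>e\<in>?E. \<forall>a. a \<notin> {..n} \<longrightarrow> e a = 0" using gp by (auto simp: polys_def mons_def)
    show "\<forall>x. (\<Sum>\<beta>\<in>?E. g \<beta> * mval {..n} \<beta> x) = 0"
      using zero_all[OF g er] unfolding hom_val_def mval_def by simp
  qed
  then show False using \<beta> deg by (auto simp: supp_def)
qed

lemma mdeg_add: "mdeg n (\<lambda>i. \<beta> i + \<gamma> i) = mdeg n \<beta> + mdeg n \<gamma>"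
  unfolding mdeg_def by (simp add: sum.distrib)

lemma part2:
  assumes "d + n \<le> r"
  shows "general_form n d (\<lambda>F. has_apolar_star n r F)"
proof -
  have all: "has_apolar_star n r F" if F: "F \<in> forms n d" for F
    unfolding has_apolar_star_def
  proof (intro exI[of _ vl] conjI vl_star_data subsetI)
    fix g assume g: "g \<in> vanishing_ideal n (star_cone n r vl)"
    have gp: "g \<in> polys n" using g by (auto simp: vanishing_ideal_def)
    have "contract n g F \<gamma> = 0" for \<gamma>
      unfolding contract_def
    proof (rule sum.neutral, rule ballI)
      fix \<beta> assume \<beta>: "\<beta> \<in> supp g"
      show "g \<beta> * F (\<lambda>i. \<beta> i + \<gamma> i) * (\<Prod>i\<le>n. of_nat (fact (\<beta> i + \<gamma> i)) / of_nat (fact (\<gamma> i))) = 0"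
      proof (cases "F (\<lambda>i. \<beta> i + \<gamma> i) = 0")
        case False
        then have "mdeg n (\<lambda>i. \<beta> i + \<gamma> i) = d" using F by (auto simp: forms_def supp_def)
        then have "mdeg n \<beta> \<le> d" unfolding mdeg_add by simp
        then have "mdeg n \<beta> + n \<le> r" using assms by simp
        then show ?thesis using low_coeffs_zero[OF g _ \<beta>] by blast
      qed simp
    qed
    then show "g \<in> perp n F" using gp by (auto simp: perp_def)
  qed
  have pf: "polyfun_on_forms n d (\<lambda>F. 1)"
    unfolding polyfun_on_forms_def
    by (intro exI[of _ "{\<lambda>_. 0}"] exI[of _ "\<lambda>_. 1"]) simp
  have z: "(\<lambda>_. 0) \<in> forms n d" by (simp add: forms_def polys_def supp_def)
  show ?thesis unfolding general_form_def zariski_open_forms_def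
    by (intro exI[of _ "forms n d"] conjI exI[of _ "{\<lambda>F. 1}"]) (use pf z all in auto)
qed

definition sl :: "nat set \<Rightarrow> nat \<Rightarrow> nat" where
  "sl S k = sorted_list_of_set S ! k"

lemma sl_bij: assumes "finite S" "card S = n" shows "bij_betw (sl S) {..<n} S"
proof -
  let ?xs = "sorted_list_of_set S"
  have d: "distinct ?xs" and l: "length ?xs = n" and s: "set ?xs = S"
    using assms by (auto simp: distinct_sorted_list_of_set length_sorted_list_of_set set_sorted_list_of_set)
  have "inj_on (sl S) {..<n}" unfolding sl_def using d l by (auto intro!: inj_onI simp: nth_eq_iff_index_eq)
  moreover have "sl S ` {..<n} = S" unfolding sl_def using s l by (auto simp: set_conv_nth)
  ultimately show ?thesis by (simp add: bij_betw_def)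
qed

lemma sl_in: "finite S \<Longrightarrow> card S = n \<Longrightarrow> k < n \<Longrightarrow> sl S k \<in> S"
  using sl_bij bij_betwE by blast

lemma sl_surj: "finite S \<Longrightarrow> card S = n \<Longrightarrow> i \<in> S \<Longrightarrow> \<exists>k<n. sl S k = i"
proof -
  assume a: "finite S" "card S = n" "i \<in> S"
  then have "i \<in> sl S ` {..<n}" using sl_bij[of S n] unfolding bij_betw_def by auto
  then show ?thesis by auto
qed

definition Bm :: "nat \<Rightarrow> (nat \<Rightarrow> nat \<Rightarrow> complex) \<Rightarrow> nat set \<Rightarrow> (nat \<Rightarrow> complex) \<Rightarrow> complex mat" where
  "Bm n l S u = mat (Suc n) (Suc n) (\<lambda>(a,b). if a < n then l (sl S a) b else u b)"

definition pt :: "nat \<Rightarrow> (nat \<Rightarrow> nat \<Rightarrow> complex) \<Rightarrow> nat set \<Rightarrow> nat \<Rightarrow> complex" where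
  "pt n l S j = det (Bm n l S (\<lambda>b. if b = j then 1 else 0))"

lemma Bm_carrier: "Bm n l S u \<in> carrier_mat (Suc n) (Suc n)"
  unfolding Bm_def by simp

lemma det_Bm_expand:
  "det (Bm n l S u) = (\<Sum>p\<in>{p. p permutes {0..<Suc n}}. (signof p * (\<Prod>a<n. l (sl S a) (p a))) * u (p n))"
proof -
  have "det (Bm n l S u) = (\<Sum>p\<in>{p. p permutes {0..<Suc n}}. signof p * (\<Prod>a = 0..<Suc n. Bm n l S u $$ (a, p a)))"
    by (rule det_def'[OF Bm_carrier])
  also have "\<dots> = (\<Sum>p\<in>{p. p permutes {0..<Suc n}}. (signof p * (\<Prod>a<n. l (sl S a) (p a))) * u (p n))"
  proof (rule sum.cong[OF refl])
    fix p assume "p \<in> {p. p permutes {0..<Suc n}}"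
    then have p: "p permutes {0..<Suc n}" by simp
    have pa: "p a < Suc n" if "a < Suc n" for a using permutes_in_image[OF p] that by auto
    have "(\<Prod>a = 0..<Suc n. Bm n l S u $$ (a, p a)) = (\<Prod>a = 0..<n. Bm n l S u $$ (a, p a)) * Bm n l S u $$ (n, p n)"
      by (simp add: prod.atLeast0_lessThan_Suc)
    also have "(\<Prod>a = 0..<n. Bm n l S u $$ (a, p a)) = (\<Prod>a<n. l (sl S a) (p a))"
      unfolding atLeast0LessThan by (rule prod.cong) (auto simp: Bm_def pa)
    also have "Bm n l S u $$ (n, p n) = u (p n)" by (simp add: Bm_def pa)
    finally show "signof p * (\<Prod>a = 0..<Suc n. Bm n l S u $$ (a, p a)) = (signof p * (\<Prod>a<n. l (sl S a) (p a))) * u (p n)"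
      by (simp add: mult_ac)
  qed
  finally show ?thesis .
qed

lemma det_lin: "det (Bm n l S u) = lin n u (pt n l S)"
proof -
  let ?P = "{p. p permutes {0..<Suc n}}"
  let ?X = "\<lambda>p. signof p * (\<Prod>a<n. l (sl S a) (p a)) :: complex"
  have "lin n u (pt n l S) = (\<Sum>j\<le>n. u j * (\<Sum>p\<in>?P. ?X p * (if p n = j then 1 else 0)))"
    unfolding lin_def pt_def det_Bm_expand by simp
  also have "\<dots> = (\<Sum>p\<in>?P. ?X p * (\<Sum>j\<le>n. u j * (if p n = j then 1 else 0)))"
    unfolding sum_distrib_left by (subst sum.swap) (simp add: mult_ac)
  also have "\<dots> = (\<Sum>p\<in>?P. ?X p * u (p n))"
  proof (rule sum.cong[OF refl])
    fix p assume "p \<in> ?P"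
    then have "p n \<in> {0..<Suc n}" using permutes_in_image[of p "{0..<Suc n}" n] by auto
    then have "p n \<le> n" by simp
    then have "(\<Sum>j\<le>n. u j * (if p n = j then 1 else 0)) = u (p n)"
      by (simp add: if_distrib[of "\<lambda>x. u _ * x"] sum.delta' cong: if_cong)
    then show "?X p * (\<Sum>j\<le>n. u j * (if p n = j then 1 else 0)) = ?X p * u (p n)" by simp
  qed
  also have "\<dots> = det (Bm n l S u)" unfolding det_Bm_expand ..
  finally show ?thesis by simp
qed

lemma pt_orth:
  assumes "finite S" "card S = n" "i \<in> S"
  shows "lin n (l i) (pt n l S) = 0"
proof -
  obtain k where k: "k < n" "sl S k = i" using sl_surj[OF assms] by blast
  have "det (Bm n l S (l i)) = 0"
  proof (rule det_identical_rows[OF Bm_carrier, of k n])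
    show "k \<noteq> n" "k < Suc n" "n < Suc n" using k by auto
    show "row (Bm n l S (l i)) k = row (Bm n l S (l i)) n"
      unfolding Bm_def using k by (auto simp: row_mat)
  qed
  then show ?thesis using det_lin by metis
qed

lemma Bm_mult:
  assumes "a < Suc n"
  shows "(Bm n l S u *\<^sub>v vec (Suc n) z) $ a = (if a < n then lin n (l (sl S a)) z else lin n u z)"
proof -
  have e: "{0..<Suc n} = {..n}" by auto
  show ?thesis using assms unfolding Bm_def lin_def by (auto simp: scalar_prod_def e)
qed

lemma BmT_mult:
  assumes "b < Suc n"
  shows "(transpose_mat (Bm n l S u) *\<^sub>v vec (Suc n) w) $ b = (\<Sum>a<n. w a * l (sl S a) b) + w n * u b"
proof -
  have "(transpose_mat (Bm n l S u) *\<^sub>v vec (Suc n) w) $ b = (\<Sum>a\<in>{0..<Suc n}. Bm n l S u $$ (a, b) * w a)"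
    using assms by (simp add: scalar_prod_def Bm_def row_def)
  also have "\<dots> = (\<Sum>a\<in>{0..<n}. Bm n l S u $$ (a, b) * w a) + Bm n l S u $$ (n, b) * w n"
    by (simp add: sum.atLeast0_lessThan_Suc)
  also have "\<dots> = (\<Sum>a<n. w a * l (sl S a) b) + w n * u b"
    using assms unfolding atLeast0LessThan Bm_def by (auto simp: mult.commute intro!: sum.cong)
  finally show ?thesis .
qed

lemma det_zero_dep:
  assumes "det (Bm n l S u) = 0"
  shows "\<exists>w. (\<exists>a\<le>n. w a \<noteq> 0) \<and> (\<forall>j\<le>n. (\<Sum>a<n. w a * l (sl S a) j) + w n * u j = 0)"
proof -
  have "det (transpose_mat (Bm n l S u)) = 0" using assms det_transpose[OF Bm_carrier] by simp
  then obtain v where v: "v \<in> carrier_vec (Suc n)" "v \<noteq> 0\<^sub>v (Suc n)" "transpose_mat (Bm n l S u) *\<^sub>v v = 0\<^sub>v (Suc n)"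
    using det_0_iff_vec_prod_zero[of "transpose_mat (Bm n l S u)" "Suc n"] Bm_carrier by auto
  define w where "w = (\<lambda>a. v $ a)"
  have vw: "v = vec (Suc n) w" using v(1) unfolding w_def by auto
  have "\<exists>a\<le>n. w a \<noteq> 0"
  proof (rule ccontr)
    assume "\<not> ?thesis"
    then have "v = 0\<^sub>v (Suc n)" using v(1) unfolding w_def by (auto simp: vec_eq_iff)
    then show False using v(2) by simp
  qed
  moreover have "(\<Sum>a<n. w a * l (sl S a) j) + w n * u j = 0" if "j \<le> n" for j
    using BmT_mult[of j n l S u w] v(3) that unfolding vw by (metis index_zero_vec(1) less_Suc_eq_le)
  ultimately show ?thesis by blast
qed

lemma det_nonzero_star:
  assumes sd: "star_data n r l" and S: "S \<subseteq> {..<r}" "card S = n" and i0: "i0 < r" "i0 \<notin> S"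
  shows "det (Bm n l S (l i0)) \<noteq> 0"
proof
  assume "det (Bm n l S (l i0)) = 0"
  then obtain w where w: "\<exists>a\<le>n. w a \<noteq> 0" "\<And>j. j \<le> n \<Longrightarrow> (\<Sum>a<n. w a * l (sl S a) j) + w n * l i0 j = 0"
    using det_zero_dep by blast
  have fS: "finite S" using S finite_subset by blast
  have bij: "bij_betw (sl S) {..<n} S" by (rule sl_bij[OF fS S(2)])
  define c where "c = (\<lambda>i. if i = i0 then w n else w (the_inv_into {..<n} (sl S) i))"
  have ind: "lin_indep_on n l (insert i0 S)" using sd S i0 fS unfolding star_data_def by auto
  have "(\<Sum>i\<in>insert i0 S. c i * l i j) = 0" if j: "j \<le> n" for j
  proof -
    have "(\<Sum>i\<in>S. c i * l i j) = (\<Sum>a<n. c (sl S a) * l (sl S a) j)"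
      using sum.reindex_bij_betw[OF bij, of "\<lambda>i. c i * l i j"] by simp
    also have "\<dots> = (\<Sum>a<n. w a * l (sl S a) j)"
    proof (rule sum.cong[OF refl])
      fix a assume a: "a \<in> {..<n}"
      have "sl S a \<noteq> i0" using sl_in[OF fS S(2)] a i0 by auto
      moreover have "the_inv_into {..<n} (sl S) (sl S a) = a"
        using a bij by (simp add: the_inv_into_f_f bij_betw_def)
      ultimately show "c (sl S a) * l (sl S a) j = w a * l (sl S a) j" by (simp add: c_def)
    qed
    finally show ?thesis using w(2)[OF j] i0 fS by (simp add: c_def add.commute)
  qed
  then have c0: "\<forall>i\<in>insert i0 S. c i = 0" using ind unfolding lin_indep_on_def by blast
  have "w a = 0" if "a \<le> n" for a
  proof (cases "a = n")
    case True then show ?thesis using c0 by (simp add: c_def)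
  next
    case False
    then have a: "a < n" using that by simp
    have "sl S a \<noteq> i0" using sl_in[OF fS S(2) a] i0 by auto
    moreover have "the_inv_into {..<n} (sl S) (sl S a) = a"
      using a bij by (simp add: the_inv_into_f_f bij_betw_def)
    ultimately show ?thesis using c0 sl_in[OF fS S(2) a] by (auto simp: c_def)
  qed
  then show False using w(1) by blast
qed

lemma rows_indep:
  assumes ind: "lin_indep_on n l S" and fS: "finite S" and cS: "card S = m"
    and z: "\<And>j. j \<le> n \<Longrightarrow> (\<Sum>a<m. v a * l (sl S a) j) = 0" and a: "a < m"
  shows "v a = 0"
proof -
  have bij: "bij_betw (sl S) {..<m} S" by (rule sl_bij[OF fS cS])
  define c where "c = (\<lambda>i. v (the_inv_into {..<m} (sl S) i))"
  have inv: "the_inv_into {..<m} (sl S) (sl S b) = b" if "b < m" for b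
    using that bij by (simp add: the_inv_into_f_f bij_betw_def)
  have "(\<Sum>i\<in>S. c i * l i j) = 0" if j: "j \<le> n" for j
  proof -
    have "(\<Sum>i\<in>S. c i * l i j) = (\<Sum>b<m. c (sl S b) * l (sl S b) j)"
      using sum.reindex_bij_betw[OF bij, of "\<lambda>i. c i * l i j"] by simp
    also have "\<dots> = (\<Sum>b<m. v b * l (sl S b) j)" by (rule sum.cong) (auto simp: c_def inv)
    finally show ?thesis using z[OF j] by simp
  qed
  then have "\<forall>i\<in>S. c i = 0" using ind unfolding lin_indep_on_def by blast
  then have "c (sl S a) = 0" using sl_in[OF fS cS a] by blast
  then show ?thesis by (simp add: c_def inv[OF a])
qed

lemma sum_delta_at: fixes y :: "nat \<Rightarrow> complex" assumes "j \<le> n"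
  shows "(\<Sum>k\<le>n. y k * (if j = k then 1 else 0)) = y j"
proof -
  have "(\<Sum>k\<le>n. y k * (if j = k then 1 else 0)) = (\<Sum>k\<le>n. if j = k then y k else 0)"
    by (rule sum.cong) auto
  also have "\<dots> = y j" using assms by (simp add: sum.delta)
  finally show ?thesis .
qed

lemma ext_exists:
  assumes sd: "star_data n r l" and S: "S \<subseteq> {..<r}" "card S = n"
  shows "\<exists>u. det (Bm n l S u) \<noteq> 0"
proof (cases "\<exists>i0<r. i0 \<notin> S")
  case True
  then obtain i0 where "i0 < r" "i0 \<notin> S" by blast
  then show ?thesis using det_nonzero_star[OF sd S] by blast
next
  case False
  have fS: "finite S" using S finite_subset by blast
  have ind: "lin_indep_on n l S" using sd S unfolding star_data_def by auto
  show ?thesis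
  proof (rule ccontr)
    assume "\<not> ?thesis"
    then have dz: "det (Bm n l S u) = 0" for u by blast
    let ?e = "\<lambda>k b. if b = k then (1::complex) else 0"
    have ex: "\<forall>k\<in>{..n}. \<exists>w. (\<exists>a\<le>n. w a \<noteq> 0) \<and> (\<forall>j\<le>n. (\<Sum>a<n. w a * l (sl S a) j) + w n * ?e k j = 0)"
    proof
      fix k assume "k \<in> {..n}"
      show "\<exists>w. (\<exists>a\<le>n. w a \<noteq> 0) \<and> (\<forall>j\<le>n. (\<Sum>a<n. w a * l (sl S a) j) + w n * ?e k j = 0)"
        by (rule det_zero_dep[OF dz])
    qed
    obtain W where W0: "\<forall>k\<in>{..n}. (\<exists>a\<le>n. W k a \<noteq> 0) \<and> (\<forall>j\<le>n. (\<Sum>a<n. W k a * l (sl S a) j) + W k n * ?e k j = 0)"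
      using bchoice[OF ex] by (elim exE) (erule that)
    have W: "\<And>k. k \<le> n \<Longrightarrow> (\<exists>a\<le>n. W k a \<noteq> 0)"
      "\<And>k j. k \<le> n \<Longrightarrow> j \<le> n \<Longrightarrow> (\<Sum>a<n. W k a * l (sl S a) j) + W k n * ?e k j = 0"
      using W0 by auto
    have Wn: "W k n \<noteq> 0" if k: "k \<le> n" for k
    proof
      assume W0: "W k n = 0"
      have "W k a = 0" if "a < n" for a
        using rows_indep[OF ind fS S(2) _ that, of "W k"] W(2)[OF k] W0 by simp
      obtain a where a: "a \<le> n" "W k a \<noteq> 0" using W(1)[OF k] by blast
      show False
      proof (cases "a = n")
        case True then show False using a W0 by simp
      next
        case False then show False using a \<open>\<And>a. a < n \<Longrightarrow> W k a = 0\<close> by simp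
      qed
    qed
    define M where "M = (\<lambda>k a. - W k a / W k n)"
    have Mrep: "?e k j = (\<Sum>a<n. M k a * l (sl S a) j)" if "k \<le> n" "j \<le> n" for k j
    proof -
      have "W k n * ?e k j = - (\<Sum>a<n. W k a * l (sl S a) j)" using W(2)[OF that] by (simp add: eq_neg_iff_add_eq_0 add.commute)
      then have "?e k j = - (\<Sum>a<n. W k a * l (sl S a) j) / W k n" using Wn[OF that(1)] by (simp add: field_simps)
      also have "\<dots> = (\<Sum>a<n. M k a * l (sl S a) j)"
        unfolding M_def sum_divide_distrib sum_negf[symmetric] by (rule sum.cong) auto
      finally show ?thesis .
    qed
    have "card {..<n} < card {..n}" by simp
    from exists_nontrivial_solution[OF finite_lessThan finite_atMost this, of "\<lambda>q u. M u q"]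
    obtain y where y: "\<exists>u\<in>{..n}. y u \<noteq> 0" "\<forall>q\<in>{..<n}. (\<Sum>u\<le>n. M u q * y u) = 0" by blast
    have "y j = 0" if j: "j \<le> n" for j
    proof -
      have "y j = (\<Sum>k\<le>n. y k * ?e k j)" using sum_delta_at[OF j, of y] by simp
      also have "\<dots> = (\<Sum>k\<le>n. y k * (\<Sum>a<n. M k a * l (sl S a) j))" using Mrep j by simp
      also have "\<dots> = (\<Sum>a<n. l (sl S a) j * (\<Sum>k\<le>n. M k a * y k))"
        unfolding sum_distrib_left by (subst sum.swap) (simp add: mult_ac)
      also have "\<dots> = 0" using y(2) by simp
      finally show ?thesis .
    qed
    then show False using y(1) by auto
  qed
qed

lemma cone_line:
  assumes fS: "finite S" and cS: "card S = n" and D: "det (Bm n l S u) \<noteq> 0"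
    and v: "\<And>i. i \<in> S \<Longrightarrow> lin n (l i) v = 0"
  shows "\<exists>t. \<forall>j\<le>n. v j = t * pt n l S j"
proof -
  let ?p = "pt n l S"
  define Dv where "Dv = det (Bm n l S u)"
  have Dl: "Dv = lin n u ?p" unfolding Dv_def by (rule det_lin)
  define z where "z = (\<lambda>j. Dv * v j - lin n u v * ?p j)"
  have linz: "lin n f z = Dv * lin n f v - lin n u v * lin n f ?p" for f
    unfolding z_def lin_def by (simp add: algebra_simps sum_subtractf sum_distrib_left)
  have z0: "z j = 0" if j: "j \<le> n" for j
  proof (rule ccontr)
    assume nz: "z j \<noteq> 0"
    have "Bm n l S u *\<^sub>v vec (Suc n) z = 0\<^sub>v (Suc n)"
    proof (rule eq_vecI)
      fix a assume "a < dim_vec (0\<^sub>v (Suc n) :: complex vec)"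
      then have a: "a < Suc n" by simp
      show "(Bm n l S u *\<^sub>v vec (Suc n) z) $ a = 0\<^sub>v (Suc n) $ a"
      proof (cases "a < n")
        case True
        have "lin n (l (sl S a)) z = 0" unfolding linz
          using v[OF sl_in[OF fS cS True]] pt_orth[OF fS cS sl_in[OF fS cS True]] by simp
        then show ?thesis using True a by (simp add: Bm_mult)
      next
        case False
        have "lin n u z = 0" unfolding linz Dl by (simp add: mult.commute)
        then show ?thesis using False a by (simp add: Bm_mult)
      qed
    qed (simp add: Bm_def)
    moreover have "vec (Suc n) z \<noteq> 0\<^sub>v (Suc n)"
    proof
      assume "vec (Suc n) z = 0\<^sub>v (Suc n)"
      then have "vec (Suc n) z $ j = 0\<^sub>v (Suc n) $ j" by simp
      then show False using nz j by simp
    qed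
    ultimately have "det (Bm n l S u) = 0"
      by (subst det_0_iff_vec_prod_zero[OF Bm_carrier]) (intro exI[of _ "vec (Suc n) z"] conjI, auto)
    then show False using D by simp
  qed
  have "v j = (lin n u v / Dv) * ?p j" if "j \<le> n" for j
    using z0[OF that] D unfolding z_def Dv_def by (simp add: field_simps)
  then show ?thesis by blast
qed

definition Mon :: "nat \<Rightarrow> nat \<Rightarrow> expo set" where
  "Mon n d = {\<alpha>\<in>mons n. mdeg n \<alpha> = d}"

definition Sub :: "nat \<Rightarrow> nat \<Rightarrow> nat set set" where
  "Sub n r = {S. S \<subseteq> {..<r} \<and> card S = n}"

definition wt :: "nat \<Rightarrow> (nat \<Rightarrow> nat \<Rightarrow> complex) \<Rightarrow> nat set \<Rightarrow> expo \<Rightarrow> complex" where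
  "wt n l S \<alpha> = (\<Prod>i\<le>n. pt n l S i ^ \<alpha> i) / (\<Prod>i\<le>n. of_nat (fact (\<alpha> i)))"

lemma Mon_sub_box: "Mon n d \<subseteq> box {..n} d"
proof
  fix \<alpha> assume a: "\<alpha> \<in> Mon n d"
  have "\<alpha> i \<le> d" if "i \<le> n" for i
  proof -
    have "\<alpha> i \<le> mdeg n \<alpha>" unfolding mdeg_def using that by (intro member_le_sum) auto
    then show ?thesis using a by (simp add: Mon_def)
  qed
  then show "\<alpha> \<in> box {..n} d" using a by (auto simp: box_def Mon_def mons_def)
qed

lemma finite_Mon: "finite (Mon n d)"
  using finite_subset[OF Mon_sub_box finite_box] by blast

lemma finite_Sub: "finite (Sub n r)"
  unfolding Sub_def by (rule finite_subset[of _ "Pow {..<r}"]) auto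

lemma fact_prod_nz: "(\<Prod>i\<le>n. of_nat (fact (\<alpha> i)) :: complex) \<noteq> 0"
proof -
  have "(\<Prod>i\<le>n. fact (\<alpha> i) :: nat) \<noteq> 0" using prod_pos[of "{..n}" "\<lambda>i. fact (\<alpha> i) :: nat"] by simp
  then show ?thesis by (metis of_nat_eq_0_iff of_nat_prod)
qed

lemma bad_span:
  assumes sd: "star_data n r l" and nr: "n \<le> r"
    and ap: "vanishing_ideal n (star_cone n r l) \<subseteq> perp n F"
  shows "\<exists>c. \<forall>\<alpha>\<in>Mon n d. F \<alpha> = (\<Sum>S\<in>Sub n r. c S * wt n l S \<alpha>)"
proof -
  from separation[OF finite_Sub finite_Mon, where F = F and w = "\<lambda>S \<alpha>. wt n l S \<alpha>"]
  show ?thesis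
  proof
    assume "\<exists>h. (\<forall>S\<in>Sub n r. (\<Sum>\<alpha>\<in>Mon n d. h \<alpha> * wt n l S \<alpha>) = 0) \<and> (\<Sum>\<alpha>\<in>Mon n d. h \<alpha> * F \<alpha>) \<noteq> 0"
    then obtain h where h: "\<And>S. S \<in> Sub n r \<Longrightarrow> (\<Sum>\<alpha>\<in>Mon n d. h \<alpha> * wt n l S \<alpha>) = 0"
      "(\<Sum>\<alpha>\<in>Mon n d. h \<alpha> * F \<alpha>) \<noteq> 0" by blast
    define fp where "fp = (\<lambda>\<beta>::expo. (\<Prod>i\<le>n. of_nat (fact (\<beta> i)) :: complex))"
    define g where "g = (\<lambda>\<beta>. if \<beta> \<in> Mon n d then h \<beta> / fp \<beta> else 0)"
    have sg: "supp g \<subseteq> Mon n d" unfolding supp_def g_def by auto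
    have gp: "g \<in> polys n" using sg finite_subset[OF sg finite_Mon] unfolding polys_def Mon_def by auto
    have sum_supp: "(\<Sum>\<beta>\<in>supp g. g \<beta> * f \<beta>) = (\<Sum>\<beta>\<in>Mon n d. g \<beta> * f \<beta>)" for f
      by (rule sum.mono_neutral_left[OF finite_Mon sg]) (auto simp: supp_def)
    have "g \<in> vanishing_ideal n (star_cone n r l)"
      unfolding vanishing_ideal_def
    proof (intro CollectI conjI gp ballI)
      fix v assume "v \<in> star_cone n r l"
      then obtain S where S: "S \<subseteq> {..<r}" "card S = n" "\<And>i. i \<in> S \<Longrightarrow> lin n (l i) v = 0"
        unfolding star_cone_def by blast
      have fS: "finite S" using S finite_subset by blast
      obtain u where u: "det (Bm n l S u) \<noteq> 0" using ext_exists[OF sd S(1,2)] by blast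
      obtain t where t: "\<And>j. j \<le> n \<Longrightarrow> v j = t * pt n l S j" using cone_line[OF fS S(2) u S(3)] by blast
      have "peval n g v = (\<Sum>\<beta>\<in>Mon n d. g \<beta> * (\<Prod>i\<le>n. v i ^ \<beta> i))" unfolding peval_def sum_supp ..
      also have "\<dots> = (\<Sum>\<beta>\<in>Mon n d. t ^ d * (h \<beta> * wt n l S \<beta>))"
      proof (rule sum.cong[OF refl])
        fix \<beta> assume b: "\<beta> \<in> Mon n d"
        have "(\<Prod>i\<le>n. v i ^ \<beta> i) = (\<Prod>i\<le>n. (t * pt n l S i) ^ \<beta> i)" using t by (intro prod.cong) auto
        also have "\<dots> = t ^ d * (\<Prod>i\<le>n. pt n l S i ^ \<beta> i)" unfolding prod_scale using b by (simp add: Mon_def)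
        finally show "g \<beta> * (\<Prod>i\<le>n. v i ^ \<beta> i) = t ^ d * (h \<beta> * wt n l S \<beta>)"
          using b by (simp add: g_def wt_def fp_def)
      qed
      also have "\<dots> = t ^ d * (\<Sum>\<beta>\<in>Mon n d. h \<beta> * wt n l S \<beta>)" by (simp add: sum_distrib_left)
      also have "\<dots> = 0" using h(1) S by (simp add: Sub_def)
      finally show "peval n g v = 0" .
    qed
    then have "g \<in> perp n F" using ap by blast
    then have "contract n g F (\<lambda>_. 0) = 0" by (simp add: perp_def)
    moreover have "contract n g F (\<lambda>_. 0) = (\<Sum>\<alpha>\<in>Mon n d. h \<alpha> * F \<alpha>)"
    proof -
      have "contract n g F (\<lambda>_. 0) = (\<Sum>\<beta>\<in>supp g. g \<beta> * (F \<beta> * fp \<beta>))"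
        unfolding contract_def fp_def by (simp add: mult_ac)
      also have "\<dots> = (\<Sum>\<beta>\<in>Mon n d. g \<beta> * (F \<beta> * fp \<beta>))" by (rule sum_supp)
      also have "\<dots> = (\<Sum>\<alpha>\<in>Mon n d. h \<alpha> * F \<alpha>)"
        by (rule sum.cong) (auto simp: g_def fp_def fact_prod_nz)
      finally show ?thesis .
    qed
    ultimately show ?thesis using h(2) by simp
  qed simp
qed

lemma normalize:
  assumes sd: "star_data n r l"
  shows "\<exists>jc l'. jc \<in> PiE {..<r} (\<lambda>_. {..n}) \<and> star_data n r l' \<and>
     star_cone n r l' = star_cone n r l \<and> (\<forall>i<r. l' i (jc i) = 1)"
proof -
  have nz: "\<exists>j. j \<le> n \<and> l i j \<noteq> 0" if i: "i < r" for i
  proof (rule ccontr)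
    assume "\<not> ?thesis"
    then have z: "\<forall>j\<le>n. l i j = 0" by auto
    have li: "lin_indep_on n l {i}" using sd i unfolding star_data_def by auto
    from li have "(\<forall>j\<le>n. (\<Sum>i'\<in>{i}. (\<lambda>_. 1::complex) i' * l i' j) = 0) \<longrightarrow> (\<forall>i'\<in>{i}. (\<lambda>_. 1::complex) i' = 0)"
      unfolding lin_indep_on_def by (rule spec)
    then show False using z by simp
  qed
  define f where "f = (\<lambda>i. SOME j. j \<le> n \<and> l i j \<noteq> 0)"
  have f: "f i \<le> n \<and> l i (f i) \<noteq> 0" if "i < r" for i
    unfolding f_def by (rule someI_ex[OF nz[OF that]])
  define jc where "jc = restrict f {..<r}"
  have jceq: "jc i = f i" if "i < r" for i using that by (simp add: jc_def)
  have jc: "jc i \<le> n" "l i (jc i) \<noteq> 0" if "i < r" for i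
    using f[OF that] jceq[OF that] by auto
  define l' where "l' = (\<lambda>i j. l i j / l i (jc i))"
  have "jc \<in> PiE {..<r} (\<lambda>_. {..n})" unfolding jc_def
    by (subst restrict_PiE_iff) (use f in auto)
  moreover have "star_data n r l'"
    unfolding star_data_def lin_indep_on_def
  proof (intro allI impI ballI)
    fix S c i assume S: "S \<subseteq> {..<r}" "card S \<le> n + 1" and c: "\<forall>j\<le>n. (\<Sum>i\<in>S. c i * l' i j) = 0" and i: "i \<in> S"
    have li: "lin_indep_on n l S" using sd S unfolding star_data_def by auto
    have "(\<Sum>i\<in>S. (c i / l i (jc i)) * l i j) = (\<Sum>i\<in>S. c i * l' i j)" for j
      by (rule sum.cong) (simp_all add: l'_def)
    then have "\<forall>j\<le>n. (\<Sum>i\<in>S. (c i / l i (jc i)) * l i j) = 0" using c by simp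
    moreover from li have "(\<forall>j\<le>n. (\<Sum>i\<in>S. (\<lambda>i. c i / l i (jc i)) i * l i j) = 0) \<longrightarrow> (\<forall>i\<in>S. (\<lambda>i. c i / l i (jc i)) i = 0)"
      unfolding lin_indep_on_def by (rule spec)
    ultimately have "c i / l i (jc i) = 0" using i by simp
    moreover have "l i (jc i) \<noteq> 0" using jc(2)[of i] S i by blast
    ultimately show "c i = 0" by simp
  qed
  moreover have "star_cone n r l' = star_cone n r l"
  proof -
    have eqv: "lin n (l' i) v = 0 \<longleftrightarrow> lin n (l i) v = 0" if "i < r" for i v
    proof -
      have "lin n (l' i) v = lin n (l i) v / l i (jc i)" unfolding lin_def l'_def
        by (simp add: sum_divide_distrib)
      then show ?thesis using jc(2)[OF that] by simp
    qed
    have that_eq: "(\<forall>i\<in>S. lin n (l' i) v = 0) \<longleftrightarrow> (\<forall>i\<in>S. lin n (l i) v = 0)" if "S \<subseteq> {..<r}" for S v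
      using eqv that by blast
    show ?thesis unfolding star_cone_def
    proof (rule Collect_cong)
      fix v
      show "((\<forall>j>n. v j = 0) \<and> (\<exists>S\<subseteq>{..<r}. card S = n \<and> (\<forall>i\<in>S. lin n (l' i) v = 0))) =
            ((\<forall>j>n. v j = 0) \<and> (\<exists>S\<subseteq>{..<r}. card S = n \<and> (\<forall>i\<in>S. lin n (l i) v = 0)))"
        using that_eq by metis
    qed
  qed
  moreover have "\<forall>i<r. l' i (jc i) = 1" using jc unfolding l'_def by simp
  ultimately show ?thesis by blast
qed

definition lmat :: "(nat \<Rightarrow> nat) \<Rightarrow> ((nat \<times> nat) + nat set \<Rightarrow> complex) \<Rightarrow> nat \<Rightarrow> nat \<Rightarrow> complex" where
  "lmat jc x i j = (if j = jc i then 1 else x (Inl (i, j)))"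

definition Avar :: "nat \<Rightarrow> nat \<Rightarrow> (nat \<Rightarrow> nat) \<Rightarrow> ((nat \<times> nat) + nat set) set" where
  "Avar n r jc = Inl ` (SIGMA i:{..<r}. {..n} - {jc i}) \<union> Inr ` Sub n r"

definition Phi :: "nat \<Rightarrow> nat \<Rightarrow> (nat \<Rightarrow> nat) \<Rightarrow> ((nat \<times> nat) + nat set \<Rightarrow> complex) \<Rightarrow> expo \<Rightarrow> complex" where
  "Phi n r jc x \<alpha> = (\<Sum>S\<in>Sub n r. x (Inr S) * wt n (lmat jc x) S \<alpha>)"

lemma pt_cong:
  assumes "finite S" "card S = n" "\<And>i j. i \<in> S \<Longrightarrow> j \<le> n \<Longrightarrow> l i j = l' i j"
  shows "pt n l S k = pt n l' S k"
proof -
  have "Bm n l S u = Bm n l' S u" for u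
    unfolding Bm_def using assms sl_in[OF assms(1,2)] by (intro eq_matI) auto
  then show ?thesis unfolding pt_def by simp
qed

lemma bad_param:
  assumes sd: "star_data n r l" and nr: "n \<le> r"
    and ap: "vanishing_ideal n (star_cone n r l) \<subseteq> perp n F"
  shows "\<exists>jc\<in>PiE {..<r} (\<lambda>_. {..n}). \<exists>x. \<forall>\<alpha>\<in>Mon n d. F \<alpha> = Phi n r jc x \<alpha>"
proof -
  obtain jc l' where jc: "jc \<in> PiE {..<r} (\<lambda>_. {..n})" and sd': "star_data n r l'"
    and cone: "star_cone n r l' = star_cone n r l" and one: "\<forall>i<r. l' i (jc i) = 1"
    using normalize[OF sd] by blast
  obtain c where c: "\<forall>\<alpha>\<in>Mon n d. F \<alpha> = (\<Sum>S\<in>Sub n r. c S * wt n l' S \<alpha>)"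
    using bad_span[OF sd' nr, of F d] ap cone by auto
  define x where "x = (\<lambda>v. case v of Inl (i, j) \<Rightarrow> l' i j | Inr S \<Rightarrow> c S)"
  have "wt n (lmat jc x) S \<alpha> = wt n l' S \<alpha>" if S: "S \<in> Sub n r" for S \<alpha>
  proof -
    have fS: "finite S" and cS: "card S = n" using S finite_subset by (auto simp: Sub_def)
    have "pt n (lmat jc x) S k = pt n l' S k" for k
      by (rule pt_cong[OF fS cS]) (use S one in \<open>auto simp: lmat_def x_def Sub_def\<close>)
    then show ?thesis unfolding wt_def by simp
  qed
  then have "\<forall>\<alpha>\<in>Mon n d. F \<alpha> = Phi n r jc x \<alpha>" using c unfolding Phi_def by (simp add: x_def)
  then show ?thesis using jc by blast
qed

lemma card_Sub: "card (Sub n r) = r choose n"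
  unfolding Sub_def using n_subsets[of "{..<r}" n] by simp

lemma card_Mon: "card (Mon n d) = (n + d) choose n"
proof -
  define L where "L = {xs::nat list. length xs = Suc n \<and> sum_list xs = d}"
  have cL: "card L = (n + d) choose n"
  proof -
    have "card L = (d + Suc n - 1) choose d" unfolding L_def by (rule card_length_sum_list)
    also have "\<dots> = (n + d) choose d" by (simp add: add.commute)
    also have "\<dots> = (n + d) choose n" using binomial_symmetric[of d "n+d"] by simp
    finally show ?thesis .
  qed
  have s: "sum_list (map \<alpha> [0..<Suc n]) = mdeg n \<alpha>" for \<alpha>
  proof -
    have "sum_list (map \<alpha> [0..<Suc n]) = sum \<alpha> (set [0..<Suc n])"
      by (rule sum_set_upt_conv_sum_list_nat[symmetric])
    also have "set [0..<Suc n] = {..n}" by auto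
    finally show ?thesis by (simp add: mdeg_def)
  qed
  have "bij_betw (\<lambda>\<alpha>. map \<alpha> [0..<Suc n]) (Mon n d) L"
  proof (rule bij_betw_byWitness[where f' = "\<lambda>xs i. if i \<le> n then xs ! i else 0"])
    show "\<forall>a\<in>Mon n d. (\<lambda>i. if i \<le> n then map a [0..<Suc n] ! i else 0) = a"
      by (auto simp: Mon_def mons_def fun_eq_iff nth_map less_Suc_eq_le simp del: upt_Suc)
    show "\<forall>a'\<in>L. map (\<lambda>i. if i \<le> n then a' ! i else 0) [0..<Suc n] = a'"
      by (auto simp: L_def intro!: nth_equalityI simp del: upt_Suc)
    show "(\<lambda>\<alpha>. map \<alpha> [0..<Suc n]) ` Mon n d \<subseteq> L"
      using s by (auto simp: L_def Mon_def simp del: upt_Suc)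
    show "(\<lambda>xs i. if i \<le> n then xs ! i else 0) ` L \<subseteq> Mon n d"
    proof
      fix \<alpha> assume "\<alpha> \<in> (\<lambda>xs i. if i \<le> n then xs ! i else 0) ` L"
      then obtain xs where xs: "xs \<in> L" "\<alpha> = (\<lambda>i. if i \<le> n then xs ! i else 0)" by blast
      have "mdeg n \<alpha> = (\<Sum>i<Suc n. xs ! i)" unfolding mdeg_def xs(2) lessThan_Suc_atMost by simp
      also have "\<dots> = sum_list xs" using xs(1) by (simp add: L_def sum_list_sum_nth atLeast0LessThan)
      finally show "\<alpha> \<in> Mon n d" using xs by (auto simp: Mon_def mons_def L_def)
    qed
  qed
  then show ?thesis using cL bij_betw_same_card by metis
qed

lemma binom_three: "6 * (Suc (Suc m) choose 3) = Suc (Suc m) * Suc m * m"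
proof -
  have a: "3 * (Suc (Suc m) choose 3) = Suc (Suc m) * (Suc m choose 2)"
    using Suc_times_binomial[of 2 "Suc m"] by (simp add: numeral_eq_Suc)
  have b: "2 * (Suc m choose 2) = Suc m * m"
    using Suc_times_binomial[of 1 m] by (simp add: numeral_eq_Suc)
  have "6 * (Suc (Suc m) choose 3) = 2 * (Suc (Suc m) * (Suc m choose 2))" using a by simp
  also have "\<dots> = Suc (Suc m) * (2 * (Suc m choose 2))" by simp
  also have "\<dots> = Suc (Suc m) * (Suc m * m)" by (simp only: b)
  finally show ?thesis by (simp only: mult.assoc)
qed

lemma ineq_key:
  assumes n: "6 \<le> n" and d: "3 \<le> d"
  shows "(d + n - 1) * n < (d + n - 1) choose (n - 1)"
  using d
proof (induction d rule: dec_induct)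
  case base
  have "(n + 2) choose (n - 1) = (n + 2) choose 3"
    using binomial_symmetric[of "n - 1" "n + 2"] n by simp
  moreover have "6 * ((n + 2) choose 3) = (n + 2) * (n + 1) * n"
    using binom_three[of n] by simp
  moreover have "6 * ((n + 2) * n) < (n + 2) * (n + 1) * n"
  proof -
    have "((n+2)*n) * 6 < ((n+2)*n) * (n+1)" using n by (intro mult_strict_left_mono) auto
    then show ?thesis by (simp only: ac_simps)
  qed
  ultimately show ?case by (simp add: add.commute)
next
  case (step d)
  have nm: "n - 1 = Suc (n - 2)" using n by simp
  have dn: "d + n = Suc (d + n - 1)" using n by simp
  have e1: "Suc d + n - 1 = Suc (d + n - 1)" using n by simp
  have "(Suc d + n - 1) choose (n - 1) = ((d + n - 1) choose (n - 2)) + ((d + n - 1) choose (n - 1))"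
    unfolding e1 nm by (rule binomial_Suc_Suc)
  moreover have "n \<le> (d + n - 1) choose (n - 2)"
  proof -
    have "(n + 2) choose 1 \<le> (n + 2) choose 4" using n by (intro binomial_mono) auto
    also have "(n + 2) choose 4 = (n + 2) choose (n - 2)"
      using binomial_symmetric[of 4 "n+2"] n by simp
    also have "\<dots> \<le> (d + n - 1) choose (n - 2)" using step.hyps by (intro binomial_right_mono) simp
    finally show ?thesis by simp
  qed
  moreover have "(d + n) * n = (d + n - 1) * n + n" using n by (cases "d + n") auto
  ultimately show ?case using step.IH by simp
qed

lemma ineq_main:
  assumes n: "6 \<le> n" and d: "3 \<le> d" and r: "r < d + n"
  shows "r * n + (r choose n) < (n + d) choose n"
proof -
  have "r * n + (r choose n) \<le> (d + n - 1) * n + ((d + n - 1) choose n)"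
    using r by (intro add_mono mult_right_mono binomial_right_mono) auto
  also have "\<dots> < ((d + n - 1) choose (n - 1)) + ((d + n - 1) choose n)"
    using ineq_key[OF n d] by simp
  also have "\<dots> = (n + d) choose n"
    using binomial_Suc_Suc[of "d + n - 1" "n - 1"] n by (simp add: add.commute)
  finally show ?thesis .
qed

lemma card_Avar:
  assumes jc: "jc \<in> PiE {..<r} (\<lambda>_. {..n})"
  shows "finite (Avar n r jc) \<and> card (Avar n r jc) \<le> r * n + card (Sub n r)"
proof -
  let ?Sg = "SIGMA i:{..<r}. {..n} - {jc i}"
  have fSg: "finite ?Sg" by auto
  have "card ?Sg = (\<Sum>i<r. card ({..n} - {jc i}))" by (simp add: card_SigmaI)
  also have "\<dots> = (\<Sum>i<r. n)" using jc by (intro sum.cong) (auto simp: PiE_def Pi_def)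
  finally have cSg: "card ?Sg = r * n" by simp
  have "card (Avar n r jc) \<le> card (Inl ` ?Sg :: ((nat \<times> nat) + nat set) set) + card (Inr ` Sub n r :: ((nat \<times> nat) + nat set) set)"
    unfolding Avar_def by (rule card_Un_le)
  also have "\<dots> \<le> card ?Sg + card (Sub n r)" by (intro add_mono card_image_le fSg finite_Sub)
  finally show ?thesis using cSg fSg finite_Sub by (simp add: Avar_def)
qed

lemma entry_poly:
  assumes jc: "jc \<in> PiE {..<r} (\<lambda>_. {..n})" and S: "S \<in> Sub n r"
    and pa: "p a < Suc n" and a: "a < Suc n"
  shows "is_poly (Avar n r jc) 1 (\<lambda>x. Bm n (lmat jc x) S u $$ (a, p a))"
proof -
  have fA: "finite (Avar n r jc)" using card_Avar[OF jc] by blast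
  have fS: "finite S" and cS: "card S = n" and Sr: "S \<subseteq> {..<r}" using S finite_subset by (auto simp: Sub_def)
  have e: "Bm n (lmat jc x) S u $$ (a, p a) = (if a < n then lmat jc x (sl S a) (p a) else u (p a))" for x
    unfolding Bm_def using pa a by simp
  show ?thesis
  proof (cases "a < n")
    case True
    have sa: "sl S a < r" using sl_in[OF fS cS True] Sr by auto
    show ?thesis
    proof (cases "p a = jc (sl S a)")
      case True2: True
      have "(\<lambda>x. Bm n (lmat jc x) S u $$ (a, p a)) = (\<lambda>x. 1)"
        unfolding e using True True2 by (simp add: lmat_def)
      then show ?thesis using is_poly_const[OF fA] by simp
    next
      case False
      have "(\<lambda>x. Bm n (lmat jc x) S u $$ (a, p a)) = (\<lambda>x. x (Inl (sl S a, p a)))"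
        unfolding e using True False by (simp add: lmat_def)
      moreover have "Inl (sl S a, p a) \<in> Avar n r jc" unfolding Avar_def using sa pa False by auto
      ultimately show ?thesis using is_poly_var[OF fA] by simp
    qed
  next
    case False
    have "(\<lambda>x. Bm n (lmat jc x) S u $$ (a, p a)) = (\<lambda>x. u (p a))" unfolding e using False by simp
    then show ?thesis using is_poly_const[OF fA] by simp
  qed
qed

lemma pt_poly:
  assumes jc: "jc \<in> PiE {..<r} (\<lambda>_. {..n})" and S: "S \<in> Sub n r"
  shows "is_poly (Avar n r jc) (Suc n) (\<lambda>x. pt n (lmat jc x) S j)"
proof -
  have fA: "finite (Avar n r jc)" using card_Avar[OF jc] by blast
  let ?u = "\<lambda>b. if b = j then 1 else (0::complex)"
  let ?P = "{p. p permutes {0..<Suc n}}"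
  have eq: "(\<lambda>x. pt n (lmat jc x) S j) =
    (\<lambda>x. \<Sum>p\<in>?P. signof p * (\<Prod>a = 0..<Suc n. Bm n (lmat jc x) S ?u $$ (a, p a)))"
    unfolding pt_def by (intro ext det_def'[OF Bm_carrier])
  have "is_poly (Avar n r jc) (Suc n) (\<lambda>x. \<Sum>p\<in>?P. signof p * (\<Prod>a = 0..<Suc n. Bm n (lmat jc x) S ?u $$ (a, p a)))"
  proof (rule is_poly_sum[OF fA])
    show "finite ?P" by (rule finite_permutations) simp
    fix p assume "p \<in> ?P"
    then have p: "p permutes {0..<Suc n}" by simp
    have pa: "p a < Suc n" if "a < Suc n" for a
    proof -
      have "p a \<in> {0..<Suc n}" using permutes_in_image[OF p] that by simp
      then show ?thesis by simp
    qed
    have "is_poly (Avar n r jc) (\<Sum>a = 0..<Suc n. 1) (\<lambda>x. \<Prod>a = 0..<Suc n. Bm n (lmat jc x) S ?u $$ (a, p a))"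
      by (rule is_poly_prod[OF fA]) (use entry_poly[OF jc S] pa in auto)
    then show "is_poly (Avar n r jc) (Suc n) (\<lambda>x. signof p * (\<Prod>a = 0..<Suc n. Bm n (lmat jc x) S ?u $$ (a, p a)))"
      using is_poly_smult by simp
  qed
  then show ?thesis unfolding eq .
qed

lemma wt_poly:
  assumes jc: "jc \<in> PiE {..<r} (\<lambda>_. {..n})" and S: "S \<in> Sub n r" and \<alpha>: "\<alpha> \<in> Mon n d"
  shows "is_poly (Avar n r jc) (Suc n * d) (\<lambda>x. wt n (lmat jc x) S \<alpha>)"
proof -
  have fA: "finite (Avar n r jc)" using card_Avar[OF jc] by blast
  have "is_poly (Avar n r jc) (\<Sum>i\<le>n. Suc n * \<alpha> i) (\<lambda>x. \<Prod>i\<le>n. pt n (lmat jc x) S i ^ \<alpha> i)"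
  proof (rule is_poly_prod[OF fA])
    fix i assume "i \<in> {..n}"
    show "is_poly (Avar n r jc) (Suc n * \<alpha> i) (\<lambda>x. pt n (lmat jc x) S i ^ \<alpha> i)"
      by (rule is_poly_power[OF fA pt_poly[OF jc S]])
  qed simp
  moreover have "(\<Sum>i\<le>n. Suc n * \<alpha> i) = Suc n * d"
  proof -
    have "(\<Sum>i\<le>n. Suc n * \<alpha> i) = Suc n * (\<Sum>i\<le>n. \<alpha> i)" by (rule sum_distrib_left[symmetric])
    then show ?thesis using \<alpha> by (simp only: Mon_def mdeg_def mem_Collect_eq)
  qed
  ultimately have h: "is_poly (Avar n r jc) (Suc n * d) (\<lambda>x. \<Prod>i\<le>n. pt n (lmat jc x) S i ^ \<alpha> i)"
    by simp
  have eqw: "(\<lambda>x. wt n (lmat jc x) S \<alpha>) =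
      (\<lambda>x. (1 / (\<Prod>i\<le>n. of_nat (fact (\<alpha> i)))) * (\<Prod>i\<le>n. pt n (lmat jc x) S i ^ \<alpha> i))"
    by (simp add: wt_def fun_eq_iff)
  show ?thesis unfolding eqw by (rule is_poly_smult[OF h])
qed

lemma Phi_poly:
  assumes jc: "jc \<in> PiE {..<r} (\<lambda>_. {..n})" and \<alpha>: "\<alpha> \<in> Mon n d"
  shows "is_poly (Avar n r jc) (Suc (Suc n * d)) (\<lambda>x. Phi n r jc x \<alpha>)"
  unfolding Phi_def
proof (rule is_poly_sum)
  show fA: "finite (Avar n r jc)" using card_Avar[OF jc] by blast
  show "finite (Sub n r)" by (rule finite_Sub)
  fix S assume S: "S \<in> Sub n r"
  have "is_poly (Avar n r jc) (1 + Suc n * d) (\<lambda>x. x (Inr S) * wt n (lmat jc x) S \<alpha>)"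
    by (rule is_poly_mult[OF fA is_poly_var[OF fA] wt_poly[OF jc S \<alpha>]]) (use S in \<open>auto simp: Avar_def\<close>)
  then show "is_poly (Avar n r jc) (Suc (Suc n * d)) (\<lambda>x. x (Inr S) * wt n (lmat jc x) S \<alpha>)" by simp
qed

lemma Mon_eq: "{\<alpha>\<in>mons n. mdeg n \<alpha> = d} = Mon n d" by (simp add: Mon_def)

lemma part1_main:
  assumes n: "6 \<le> n" and d: "3 \<le> d" and nr: "n \<le> r" and r: "r < d + n"
  shows "general_form n d (\<lambda>F. \<not> has_apolar_star n r F)"
proof -
  let ?J = "PiE {..<r} (\<lambda>_. {..n})"
  let ?m = "r * n + card (Sub n r)"
  have fJ: "finite ?J" by (rule finite_PiE) auto
  have mB: "?m < card (Mon n d)" unfolding card_Sub card_Mon using ineq_main[OF n d r] .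
  have ann: "\<exists>D c. (\<exists>e\<in>monset (Mon n d) D. c e \<noteq> 0) \<and>
     (\<forall>jc\<in>?J. \<forall>x. (\<Sum>e\<in>monset (Mon n d) D. c e * mval (Mon n d) e (Phi n r jc x)) = 0)"
  proof (rule annihilating_poly[OF fJ finite_Mon, where A = "Avar n r" and m = "r * n + card (Sub n r)"
      and \<Phi> = "Phi n r" and k = "Suc (Suc n * d)"])
    show "\<And>j. j \<in> ?J \<Longrightarrow> finite (Avar n r j) \<and> card (Avar n r j) \<le> r * n + card (Sub n r)"
      by (rule card_Avar)
    show "r * n + card (Sub n r) < card (Mon n d)" by (rule mB)
    show "\<And>j b. j \<in> ?J \<Longrightarrow> b \<in> Mon n d \<Longrightarrow> is_poly (Avar n r j) (Suc (Suc n * d)) (\<lambda>x. Phi n r j x b)"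
      by (rule Phi_poly)
  qed
  then obtain D c where c: "\<exists>e\<in>monset (Mon n d) D. c e \<noteq> 0"
    and van: "\<forall>jc\<in>?J. \<forall>x. (\<Sum>e\<in>monset (Mon n d) D. c e * mval (Mon n d) e (Phi n r jc x)) = 0"
    by (elim exE conjE)
  define E where "E = monset (Mon n d) D"
  define \<phi> where "\<phi> = (\<lambda>F::cpoly. \<Sum>e\<in>E. c e * (\<Prod>\<alpha>\<in>{\<alpha>\<in>mons n. mdeg n \<alpha> = d}. F \<alpha> ^ e \<alpha>))"
  have \<phi>_mval: "\<phi> F = (\<Sum>e\<in>E. c e * mval (Mon n d) e F)" for F
    unfolding \<phi>_def mval_def Mon_eq ..
  have fE: "finite E" unfolding E_def by (rule finite_monset[OF finite_Mon])
  have pf: "polyfun_on_forms n d \<phi>"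
    unfolding polyfun_on_forms_def by (intro exI[of _ E] exI[of _ c] conjI fE ballI) (simp add: \<phi>_def)
  define U where "U = {F\<in>forms n d. \<phi> F \<noteq> 0}"
  have zo: "zariski_open_forms n d U"
    unfolding zariski_open_forms_def U_def by (intro exI[of _ "{\<phi>}"]) (use pf in auto)
  have ne: "U \<noteq> {}"
  proof -
    have "\<exists>x. (\<Sum>e\<in>E. c e * mval (Mon n d) e x) \<noteq> 0"
    proof (rule ccontr)
      assume "\<not> ?thesis"
      then have all0: "\<forall>x. (\<Sum>e\<in>E. c e * mval (Mon n d) e x) = 0" by simp
      have "\<forall>e\<in>E. c e = 0"
      proof (rule poly_zero_coeffs[OF finite_Mon fE])
        show "\<forall>e\<in>E. \<forall>a. a \<notin> Mon n d \<longrightarrow> e a = 0" unfolding E_def monset_def by simp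
        show "\<forall>x. (\<Sum>e\<in>E. c e * mval (Mon n d) e x) = 0" by (rule all0)
      qed
      moreover obtain e where "e \<in> monset (Mon n d) D" "c e \<noteq> 0" using c by blast
      ultimately show False unfolding E_def by simp
    qed
    then obtain x where x: "(\<Sum>e\<in>E. c e * mval (Mon n d) e x) \<noteq> 0" by blast
    define F0 where "F0 = (\<lambda>\<alpha>. if \<alpha> \<in> Mon n d then x \<alpha> else 0)"
    have sF0: "supp F0 \<subseteq> Mon n d" unfolding supp_def F0_def by auto
    have "finite (supp F0)" using finite_subset[OF sF0 finite_Mon] .
    moreover have "supp F0 \<subseteq> mons n" using sF0 unfolding Mon_def by auto
    moreover have "\<forall>\<alpha>\<in>supp F0. mdeg n \<alpha> = d" using sF0 unfolding Mon_def by auto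
    ultimately have F0f: "F0 \<in> forms n d" unfolding forms_def polys_def by simp
    have "\<phi> F0 = (\<Sum>e\<in>E. c e * mval (Mon n d) e x)"
      unfolding \<phi>_mval by (intro sum.cong refl arg_cong2[where f = "(*)"] mval_cong) (simp add: F0_def)
    then have "F0 \<in> U" unfolding U_def using F0f x by simp
    then show ?thesis by auto
  qed
  have good: "\<not> has_apolar_star n r F" if F: "F \<in> U" for F
  proof
    assume "has_apolar_star n r F"
    then obtain l where sd: "star_data n r l" and ap: "vanishing_ideal n (star_cone n r l) \<subseteq> perp n F"
      unfolding has_apolar_star_def by blast
    obtain jc x where jc: "jc \<in> ?J" and Fx: "\<forall>\<alpha>\<in>Mon n d. F \<alpha> = Phi n r jc x \<alpha>"
      using bad_param[OF sd nr ap, of d] by blast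
    have "\<phi> F = (\<Sum>e\<in>E. c e * mval (Mon n d) e (Phi n r jc x))"
      unfolding \<phi>_mval by (intro sum.cong refl arg_cong2[where f = "(*)"] mval_cong) (use Fx in simp)
    also have "\<dots> = 0" using van jc unfolding E_def by auto
    finally show False using F unfolding U_def by simp
  qed
  show ?thesis unfolding general_form_def using zo ne good by blast
qed

lemma part1_small:
  assumes r: "r < n"
  shows "general_form n d (\<lambda>F. \<not> has_apolar_star n r F)"
proof -
  define \<alpha>0 where "\<alpha>0 = (\<lambda>i::nat. if i = 0 then d else 0)"
  have a0: "\<alpha>0 \<in> Mon n d" unfolding Mon_def mons_def mdeg_def \<alpha>0_def by auto
  define e0 where "e0 = (\<lambda>\<alpha>. if \<alpha> = \<alpha>0 then 1 else (0::nat))"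
  have pr: "(\<Prod>\<alpha>\<in>{\<alpha>\<in>mons n. mdeg n \<alpha> = d}. F \<alpha> ^ e0 \<alpha>) = F \<alpha>0" for F :: cpoly
  proof -
    have "(\<Prod>\<alpha>\<in>Mon n d. F \<alpha> ^ e0 \<alpha>) = (\<Prod>\<alpha>\<in>Mon n d. if \<alpha> = \<alpha>0 then F \<alpha> else 1)"
      by (rule prod.cong) (auto simp: e0_def)
    also have "\<dots> = F \<alpha>0" using a0 finite_Mon by (simp add: prod.delta)
    finally show ?thesis unfolding Mon_eq .
  qed
  have pf: "polyfun_on_forms n d (\<lambda>F. F \<alpha>0)"
    unfolding polyfun_on_forms_def
    by (intro exI[of _ "{e0}"] exI[of _ "\<lambda>_. 1"]) (simp add: pr)
  define U where "U = {F\<in>forms n d. F \<alpha>0 \<noteq> 0}"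
  have zo: "zariski_open_forms n d U"
    unfolding zariski_open_forms_def U_def by (intro exI[of _ "{\<lambda>F. F \<alpha>0}"]) (use pf in auto)
  define F1 where "F1 = (\<lambda>\<alpha>. if \<alpha> = \<alpha>0 then (1::complex) else 0)"
  have "supp F1 = {\<alpha>0}" unfolding supp_def F1_def by auto
  then have "F1 \<in> forms n d" using a0 unfolding forms_def polys_def by (auto simp: Mon_def)
  then have ne: "U \<noteq> {}" unfolding U_def F1_def by auto
  have good: "\<not> has_apolar_star n r F" if F: "F \<in> U" for F
  proof
    assume "has_apolar_star n r F"
    then obtain l where ap: "vanishing_ideal n (star_cone n r l) \<subseteq> perp n F"
      unfolding has_apolar_star_def by blast
    have "star_cone n r l = {}"
    proof -
      have "\<not> (S \<subseteq> {..<r} \<and> card S = n)" for S :: "nat set"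
      proof
        assume "S \<subseteq> {..<r} \<and> card S = n"
        then have "card S \<le> r" using card_mono[of "{..<r}" S] by auto
        then show False using \<open>S \<subseteq> {..<r} \<and> card S = n\<close> r by simp
      qed
      then show ?thesis unfolding star_cone_def by blast
    qed
    define one where "one = (\<lambda>\<beta>::expo. if \<beta> = (\<lambda>_. 0) then (1::complex) else 0)"
    have so: "supp one = {\<lambda>_. 0}" unfolding supp_def one_def by auto
    have "one \<in> polys n" unfolding polys_def using so by (auto simp: mons_def)
    then have "one \<in> vanishing_ideal n (star_cone n r l)"
      unfolding vanishing_ideal_def \<open>star_cone n r l = {}\<close> by simp
    then have "one \<in> perp n F" using ap by blast
    then have "contract n one F \<alpha>0 = 0" unfolding perp_def by blast
    moreover have "contract n one F \<alpha>0 = F \<alpha>0"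
      unfolding contract_def so using fact_prod_nz by (simp add: one_def)
    ultimately show False using F unfolding U_def by simp
  qed
  show ?thesis unfolding general_form_def using zo ne good by blast
qed

theorem theorem3p3:
  fixes d n r :: nat
  assumes "d \<ge> 3" and "n \<ge> 6"
  shows "(r < d + n \<longrightarrow> general_form n d (\<lambda>F. \<not> has_apolar_star n r F)) \<and>
         (r \<ge> d + n \<longrightarrow> general_form n d (\<lambda>F. has_apolar_star n r F))"
proof (intro conjI impI)
  assume r: "r < d + n"
  show "general_form n d (\<lambda>F. \<not> has_apolar_star n r F)"
  proof (cases "r < n")
    case True then show ?thesis by (rule part1_small)
  next
    case False then show ?thesis using part1_main[OF assms(2) assms(1) _ r] by simp
  qed
next
  assume "r \<ge> d + n"
  then show "general_form n d (\<lambda>F. has_apolar_star n r F)" by (rule part2)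
qed

end
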